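(* Let $\ell>0$ and let $\gamma\in C^2([0,\ell];\mathbb R^2)$ be a closed curve parametrized by arclength, of length $\ell$, with $\partial_s\gamma(0)=\partial_s\gamma(\ell)$, $\partial_s^2\gamma(0)=\partial_s^2\gamma(\ell)$ and curvature $\kappa_\gamma$. For $\epsilon\in(0,1]$ let $\gamma_\epsilon\in H^2([0,\ell];\mathbb R^2)$ be closed curves parametrized by arclength of length $\ell$ with $\gamma_\epsilon(0)=\gamma_\epsilon(\ell)$, $\partial_s\gamma_\epsilon(0)=\partial_s\gamma_\epsilon(\ell)$, curvature $\kappa_{\gamma_\epsilon}$, and assume there is $C>0$ with $$\epsilon^{1/2}\int_0^\ell\kappa_{\gamma_\epsilon}^2\,ds\le C,\qquad\int_0^\ell|\partial_s\gamma_\epsilon-\partial_s\gamma|^2\,ds\le C\epsilon^{1/2}.$$ Then there exist a subsequence $\epsilon_k\to0^+$ and $\omega\in M_{\mathrm{fin},\mathbb Z}([0,\ell])$ such that $$\lim_{k\to\infty}\|(\kappa_{\gamma_{\epsilon_k}}-\kappa_\gamma)-\omega\|_{\mathrm{flat},[0,\ell]}=0,$$ equivalently $\kappa_{\gamma_{\epsilon_k}}\to\kappa_\gamma\,ds+\omega$ in the flat norm.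
   Context: Curvatures are signed: $\kappa_{\gamma_\epsilon}=\partial_s\theta_\epsilon$ where $\partial_s\gamma_\epsilon=(\cos\theta_\epsilon,\sin\theta_\epsilon)$, and they are identified with measures $\kappa\,ds$. $M_{\mathrm{fin},\mathbb Z}([0,\ell])$ is the set of measures $2\pi\sum_{j=1}^Nc_j\delta_{s_j}$ with $c_j\in\mathbb Z$, $0\le s_1<\dots<s_N\le\ell$. The flat norm is $\|\nu\|_{\mathrm{flat},[0,\ell]}=\sup\{\int\psi\,d\nu:\psi\in C^{0,1}([0,\ell]),\ \|\psi\|_{L^\infty}+\mathrm{Lip}(\psi)\le1,\ \psi(0)=\psi(\ell)\}$. *)

theory Defs
  imports "HOL-Analysis.Analysis"
begin

text \<open>The curvature is determined only almost everywhere, which is all that matters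
  when it is identified with the measure kappa ds.\<close>
definition curvature_of :: "real \<Rightarrow> (real \<Rightarrow> real^2) \<Rightarrow> (real \<Rightarrow> real) \<Rightarrow> bool" where
  "curvature_of l dgamma kappa \<longleftrightarrow>
     kappa absolutely_integrable_on {0..l} \<and>
     (\<exists>theta. \<forall>s\<in>{0..l}. dgamma s = vector [cos (theta s), sin (theta s)] \<and>
                          theta s = theta 0 + integral {0..s} kappa)"

text \<open>M_fin,Z([0,l]): measures 2 pi sum_j c_j delta_{s_j}, c_j integers, s_j in [0,l];
  represented by the finitely supported integer weight function c.\<close>
definition Mfin_Z :: "real \<Rightarrow> (real \<Rightarrow> int) set" where
  "Mfin_Z l = {c. finite {x. c x \<noteq> 0} \<and> {x. c x \<noteq> 0} \<subseteq> {0..l}}"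

definition flat_admissible :: "real \<Rightarrow> (real \<Rightarrow> real) \<Rightarrow> bool" where
  "flat_admissible l psi \<longleftrightarrow>
     (\<exists>M L. (\<forall>s\<in>{0..l}. \<bar>psi s\<bar> \<le> M) \<and> L-lipschitz_on {0..l} psi \<and> M + L \<le> 1) \<and>
     psi 0 = psi l"

definition pairing :: "real \<Rightarrow> (real \<Rightarrow> real) \<Rightarrow> (real \<Rightarrow> int) \<Rightarrow> (real \<Rightarrow> real) \<Rightarrow> real" where
  "pairing l f c psi = integral {0..l} (\<lambda>s. psi s * f s) +
      2 * pi * (\<Sum>x\<in>{x. c x \<noteq> 0}. of_int (c x) * psi x)"

definition flat_norm :: "real \<Rightarrow> (real \<Rightarrow> real) \<Rightarrow> (real \<Rightarrow> int) \<Rightarrow> real" where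
  "flat_norm l f c = (SUP psi\<in>{psi. flat_admissible l psi}. pairing l f c psi)"

end

theory Submission
  imports Defs
begin
lemma cont_times_absint:
  fixes f g :: "real \<Rightarrow> real"
  assumes "continuous_on {a..b} f" "g absolutely_integrable_on {a..b}"
  shows "(\<lambda>x. f x * g x) absolutely_integrable_on {a..b}"
proof (rule absolutely_integrable_bounded_measurable_product_real)
  show "f \<in> borel_measurable (lebesgue_on {a..b})"
    using assms(1) by (rule continuous_imp_measurable_on_sets_lebesgue) simp
  show "bounded (f ` {a..b})"
    using assms(1) by (intro compact_imp_bounded compact_continuous_image) auto
qed (use assms in auto)

lemma abs_sin_shift: "\<bar>sin (x + of_int k * pi)\<bar> = \<bar>sin x\<bar>"
proof -
  have s: "sin (of_int k * pi) = 0" using sin_times_pi_eq_0[of "of_int k"] by simp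
  have "(cos (of_int k * pi))^2 = 1" using s sin_cos_squared_add[of "of_int k * pi"] by simp
  then have c: "\<bar>cos (of_int k * pi)\<bar> = 1"
    by (metis abs_power2 abs_le_zero_iff power2_eq_1_iff zero_le_one abs_minus_cancel abs_one)
  show ?thesis by (simp add: sin_add s abs_mult c)
qed

lemma sin_band: 
  assumes "2*pi* of_int p + pi/3 \<le> x" "x \<le> 2*pi* of_int p + 5*pi/3"
  shows "\<bar>sin (x/2)\<bar> \<ge> 1/2"
proof -
  define y where "y = x/2 - of_int p * pi"
  have y: "pi/6 \<le> y" "y \<le> 5*pi/6" using assms by (auto simp: y_def field_simps)
  have xe: "x/2 = y + of_int p * pi" by (simp add: y_def)
  have e: "\<bar>sin (x/2)\<bar> = \<bar>sin y\<bar>" unfolding xe by (rule abs_sin_shift)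
  have "sin y \<ge> 1/2"
  proof (cases "y \<le> pi/2")
    case True
    then show ?thesis using sin_monotone_2pi_le[of "pi/6" y] y sin_30 by auto
  next
    case False
    then have "sin (pi/6) \<le> sin (pi - y)" using y by (intro sin_monotone_2pi_le) auto
    then show ?thesis using sin_30 by simp
  qed
  then show ?thesis using e by simp
qed

lemma sin_small_dist:
  fixes x :: real
  assumes "\<bar>sin (x/2)\<bar> \<le> d"
  shows "\<bar>x - 2*pi* of_int (round (x/(2*pi)))\<bar> \<le> 8*d"
proof -
  define k where "k = round (x/(2*pi))"
  define y where "y = x/2 - of_int k * pi"
  have r: "\<bar>x/(2*pi) - of_int k\<bar> \<le> 1/2" unfolding k_def using of_int_round_abs_le[of "x/(2*pi)"] by linarith
  have "\<bar>y\<bar> = pi * \<bar>x/(2*pi) - of_int k\<bar>"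
    by (simp add: y_def abs_mult[symmetric] field_simps)
  then have yb: "\<bar>y\<bar> \<le> pi/2" using r by (simp add: mult_left_le[of _ pi, simplified])
  have xe: "x/2 = y + of_int k * pi" by (simp add: y_def)
  have e: "\<bar>sin (x/2)\<bar> = \<bar>sin y\<bar>" unfolding xe by (rule abs_sin_shift)
  have key: "\<bar>sin z\<bar> \<ge> z/4" if "0 \<le> z" "z \<le> pi/2" for z :: real
  proof (cases "z \<le> 1")
    case True
    have "\<bar>sin z - (\<Sum>m<3. sin_coeff m * z ^ m)\<bar> \<le> inverse (fact 3) * \<bar>z\<bar> ^ 3"
      by (rule Maclaurin_sin_bound)
    then have "\<bar>sin z - z\<bar> \<le> z^3/6"
      using that by (simp add: sin_coeff_def eval_nat_numeral fact_numeral)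
    moreover have "z^3 \<le> z" using True that 
    proof -
      have "z*z \<le> 1" using True that by (simp add: mult_le_one)
      then have "z*z*z \<le> 1*z" using that by (intro mult_right_mono) auto
      then show ?thesis by (simp add: power3_eq_cube)
    qed
    ultimately have "sin z \<ge> z - z/6" using abs_ge_minus_self[of "sin z - z"] by linarith
    then show ?thesis using that by linarith
  next
    case False
    have "sin 1 \<le> sin z" using False that by (intro sin_monotone_2pi_le) auto
    moreover have "sin 1 \<ge> (1/2::real)"
    proof -
      have "\<bar>sin 1 - (\<Sum>m<3. sin_coeff m * 1 ^ m)\<bar> \<le> inverse (fact 3) * \<bar>1::real\<bar> ^ 3"
        by (rule Maclaurin_sin_bound)
      then show ?thesis by (simp add: sin_coeff_def eval_nat_numeral fact_numeral)
    qed
    moreover have "z/4 \<le> 1/2" using that pi_less_4 by simp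
    ultimately show ?thesis by auto
  qed
  have "\<bar>y\<bar> \<le> 4 * \<bar>sin y\<bar>"
  proof (cases "y \<ge> 0")
    case True then show ?thesis using key[of y] yb by auto
  next
    case False then show ?thesis using key[of "-y"] yb by auto
  qed
  moreover have "\<bar>x - 2*pi* of_int k\<bar> = 2*\<bar>y\<bar>" by (simp add: y_def abs_mult[symmetric] field_simps)
  ultimately show ?thesis using assms e k_def by simp
qed

locale phase =
  fixes l :: real and g phi :: "real \<Rightarrow> real"
  assumes l_pos: "0 < l"
    and g_ai: "g absolutely_integrable_on {0..l}"
    and phi_eq: "\<forall>s\<in>{0..l}. phi s = phi 0 + integral {0..s} g"
begin

definition Wf :: "real \<Rightarrow> real" where "Wf s = \<bar>g s\<bar> * \<bar>sin (phi s / 2)\<bar>"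
definition W :: "real \<Rightarrow> real \<Rightarrow> real" where "W x y = integral {x..y} Wf"

lemma g_int: "g integrable_on {0..l}"
  using g_ai set_lebesgue_integral_eq_integral(1) by blast

lemma g_int_sub: "0 \<le> x \<Longrightarrow> y \<le> l \<Longrightarrow> g integrable_on {x..y}"
  using g_int by (rule integrable_subinterval_real) auto

lemma absg_int: "(\<lambda>s. \<bar>g s\<bar>) integrable_on {0..l}"
  using g_ai by (simp add: absolutely_integrable_on_def)

lemma absg_ai: "(\<lambda>s. \<bar>g s\<bar>) absolutely_integrable_on {0..l}"
  by (rule abs_absolutely_integrableI_1) (auto simp: absg_int)

lemma absg_int_sub: "0 \<le> x \<Longrightarrow> y \<le> l \<Longrightarrow> (\<lambda>s. \<bar>g s\<bar>) integrable_on {x..y}"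
  using absg_int by (rule integrable_subinterval_real) auto

lemma phi_diff: "0 \<le> x \<Longrightarrow> x \<le> y \<Longrightarrow> y \<le> l \<Longrightarrow> phi y - phi x = integral {x..y} g"
proof -
  assume a: "0 \<le> x" "x \<le> y" "y \<le> l"
  have "integral {0..x} g + integral {x..y} g = integral {0..y} g"
    using a by (intro Henstock_Kurzweil_Integration.integral_combine g_int_sub) auto
  moreover have "phi x = phi 0 + integral {0..x} g" "phi y = phi 0 + integral {0..y} g"
    using a by (auto intro!: bspec[OF phi_eq])
  ultimately show ?thesis by linarith
qed

lemma phi_cont: "continuous_on {0..l} phi"
proof -
  have "continuous_on {0..l} (\<lambda>s. phi 0 + integral {0..s} g)"
    by (intro continuous_intros indefinite_integral_continuous_1 g_int)
  then show ?thesis using phi_eq by (metis (no_types, lifting) continuous_on_cong)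
qed

lemma Wf_nonneg: "Wf s \<ge> 0" by (simp add: Wf_def)

lemma Wf_ai: "Wf absolutely_integrable_on {0..l}"
proof -
  have "continuous_on {0..l} (\<lambda>s. \<bar>sin (phi s / 2)\<bar>)"
    by (intro continuous_intros phi_cont) auto
  then have "(\<lambda>s. \<bar>sin (phi s / 2)\<bar> * \<bar>g s\<bar>) absolutely_integrable_on {0..l}"
    using absg_ai by (rule cont_times_absint)
  then show ?thesis unfolding Wf_def by (simp add: mult.commute)
qed

lemma Wf_int_sub: "0 \<le> x \<Longrightarrow> y \<le> l \<Longrightarrow> Wf integrable_on {x..y}"
proof -
  assume "0 \<le> x" "y \<le> l"
  have "Wf integrable_on {0..l}" using Wf_ai absolutely_integrable_on_def by blast
  then show ?thesis by (rule integrable_subinterval_real) (use \<open>0 \<le> x\<close> \<open>y \<le> l\<close> in auto)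
qed

lemma W_nonneg: "0 \<le> x \<Longrightarrow> y \<le> l \<Longrightarrow> W x y \<ge> 0"
  unfolding W_def by (rule integral_nonneg) (auto simp: Wf_nonneg Wf_int_sub)

lemma W_add: "0 \<le> x \<Longrightarrow> x \<le> y \<Longrightarrow> y \<le> z \<Longrightarrow> z \<le> l \<Longrightarrow> W x y + W y z = W x z"
  unfolding W_def by (intro Henstock_Kurzweil_Integration.integral_combine Wf_int_sub) auto

lemma W_mono: "0 \<le> x' \<Longrightarrow> x' \<le> x \<Longrightarrow> x \<le> y \<Longrightarrow> y \<le> y' \<Longrightarrow> y' \<le> l \<Longrightarrow> W x y \<le> W x' y'"
  unfolding W_def by (intro integral_subset_le Wf_int_sub) (auto simp: Wf_nonneg)

end

context phase begin

lemma band_base: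
  assumes ab: "0 \<le> a" "a \<le> b" "b \<le> l" and pa: "phi a \<le> c" and pb: "c' \<le> phi b" and cc: "c < c'"
    and band: "\<And>x. c \<le> x \<Longrightarrow> x \<le> c' \<Longrightarrow> \<bar>sin (x/2)\<bar> \<ge> 1/2"
  shows "W a b \<ge> (c' - c)/2"
proof -
  have cab: "continuous_on {a..b} phi" using phi_cont by (rule continuous_on_subset) (use ab in auto)
  define T where "T = {a..b} \<inter> phi -` {c'..}"
  have Tc: "closed T" unfolding T_def by (intro continuous_closed_preimage cab) auto
  have bT: "b \<in> T" using ab pb by (auto simp: T_def)
  have Tb: "bdd_below T" unfolding T_def by (rule bdd_belowI[of _ a]) auto
  define b' where "b' = Inf T"
  have b'T: "b' \<in> T" unfolding b'_def using Tc bT Tb by (intro closed_contains_Inf) auto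
  have b'le: "\<And>s. s \<in> T \<Longrightarrow> b' \<le> s" unfolding b'_def using Tb by (rule cInf_lower[rotated])
  have b'ab: "a \<le> b'" "b' \<le> b" "c' \<le> phi b'" using b'T by (auto simp: T_def)
  define U where "U = {a..b'} \<inter> phi -` {..c}"
  have cab': "continuous_on {a..b'} phi" using cab by (rule continuous_on_subset) (use b'ab in auto)
  have Uc: "closed U" unfolding U_def by (intro continuous_closed_preimage cab') auto
  have aU: "a \<in> U" using b'ab pa by (auto simp: U_def)
  have Ub: "bdd_above U" unfolding U_def by (rule bdd_aboveI[of _ b']) auto
  define a' where "a' = Sup U"
  have a'U: "a' \<in> U" unfolding a'_def using Uc aU Ub by (intro closed_contains_Sup) auto
  have a'ge: "\<And>s. s \<in> U \<Longrightarrow> s \<le> a'" unfolding a'_def using Ub by (rule cSup_upper[rotated])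
  have a'ab: "a \<le> a'" "a' \<le> b'" "phi a' \<le> c" using a'U by (auto simp: U_def)
  have cab'': "continuous_on {a'..b'} phi" using cab by (rule continuous_on_subset) (use a'ab b'ab in auto)
  obtain x1 where x1: "a' \<le> x1" "x1 \<le> b'" "phi x1 = c"
    using IVT'[of phi a' c b', OF a'ab(3) _ a'ab(2) cab''] b'ab cc by auto
  have "x1 \<in> U" using x1 a'ab by (auto simp: U_def)
  then have "x1 = a'" using a'ge x1 by force
  then have pa': "phi a' = c" using x1 by simp
  obtain x2 where x2: "a' \<le> x2" "x2 \<le> b'" "phi x2 = c'"
    using IVT'[of phi a' c' b', OF _ b'ab(3) a'ab(2) cab''] pa' cc by auto
  have "x2 \<in> T" using x2 a'ab b'ab by (auto simp: T_def)
  then have "x2 = b'" using b'le x2 by force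
  then have pb': "phi b' = c'" using x2 by simp
  have inband: "c \<le> phi s \<and> phi s \<le> c'" if s: "a' \<le> s" "s \<le> b'" for s
  proof
    show "c \<le> phi s"
    proof (cases "s = a'")
      case False
      then have "s \<notin> U" using a'ge s by force
      then show ?thesis using s a'ab by (auto simp: U_def)
    qed (use pa' in simp)
    show "phi s \<le> c'"
    proof (cases "s = b'")
      case False
      then have "s \<notin> T" using b'le s by force
      then show ?thesis using s a'ab b'ab by (auto simp: T_def)
    qed (use pb' in simp)
  qed
  have sub: "0 \<le> a'" "b' \<le> l" using ab a'ab b'ab by auto
  have "c' - c = integral {a'..b'} g" using phi_diff[of a' b'] sub a'ab pa' pb' by simp
  also have "\<dots> \<le> integral {a'..b'} (\<lambda>s. \<bar>g s\<bar>)"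
    by (rule integral_le) (use g_int_sub absg_int_sub sub in auto)
  also have "\<dots> \<le> integral {a'..b'} (\<lambda>s. 2 * Wf s)"
  proof (rule integral_le)
    show "(\<lambda>s. 2 * Wf s) integrable_on {a'..b'}" using Wf_int_sub sub by (intro integrable_on_mult_right) auto
    fix s assume "s \<in> {a'..b'}"
    then have "\<bar>sin (phi s / 2)\<bar> \<ge> 1/2" using inband band by auto
    then have "\<bar>g s\<bar> * (1/2) \<le> \<bar>g s\<bar> * \<bar>sin (phi s / 2)\<bar>" by (intro mult_left_mono) auto
    then show "\<bar>g s\<bar> \<le> 2 * Wf s" by (simp add: Wf_def)
  qed (use absg_int_sub sub in auto)
  also have "\<dots> = 2 * W a' b'" by (simp add: W_def)
  also have "\<dots> \<le> 2 * W a b" using W_mono[of a a' b' b] ab a'ab b'ab by auto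
  finally show ?thesis by simp
qed

lemma band_multi:
  "\<And>a b p. 0 \<le> a \<Longrightarrow> a \<le> b \<Longrightarrow> b \<le> l \<Longrightarrow> phi a \<le> 2*pi* of_int p + pi/3 \<Longrightarrow>
     phi b \<ge> 2*pi*(of_int p + of_nat j + 1) - pi/3 \<Longrightarrow> W a b \<ge> 2*pi/3 * (of_nat j + 1)"
proof (induction j)
  case 0
  have "W a b \<ge> ((2*pi*(of_int p + 1) - pi/3) - (2*pi* of_int p + pi/3))/2"
    by (rule band_base[OF 0(1,2,3,4)]) (use 0(5) sin_band[of p] in \<open>auto simp: algebra_simps\<close>)
  then show ?case by (simp add: algebra_simps)
next
  case (Suc j)
  have cab: "continuous_on {a..b} phi" using phi_cont by (rule continuous_on_subset) (use Suc in auto)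
  have e: "2*pi*(of_int p + of_nat (Suc j) + 1) - pi/3 = 2*pi*(of_int p + 1) + pi/3 + (2*pi* of_nat j + 4*pi/3)"
    by (simp add: algebra_simps)
  have "2*pi* of_nat j \<ge> 0" by simp
  then have "2*pi*(of_int p + 1) + pi/3 \<le> phi b" using Suc(6) pi_gt_zero e by linarith
  moreover have "phi a \<le> 2*pi*(of_int p + 1) + pi/3"
  proof -
    have "2*pi*(of_int p + 1) + pi/3 = 2*pi* of_int p + pi/3 + 2*pi" by (simp add: algebra_simps)
    then show ?thesis using Suc(5) pi_gt_zero by linarith
  qed
  ultimately obtain x where x: "a \<le> x" "x \<le> b" "phi x = 2*pi*(of_int p + 1) + pi/3"
    using IVT'[of phi a _ b, OF _ _ Suc(3) cab] by blast
  have "W a x \<ge> ((2*pi*(of_int p + 1) - pi/3) - (2*pi* of_int p + pi/3))/2"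
    by (rule band_base) (use Suc x sin_band[of p] in \<open>auto simp: algebra_simps\<close>)
  then have w1: "W a x \<ge> 2*pi/3" by (simp add: algebra_simps)
  have w2: "W x b \<ge> 2*pi/3 * (of_nat j + 1)"
    using Suc.IH[of x b "p+1"] Suc x by (auto simp: algebra_simps)
  have "W a b = W a x + W x b" using W_add[of a x b] Suc x by auto
  then show ?case using w1 w2 by (simp add: algebra_simps)
qed

lemma up_fwd:
  assumes ab: "0 \<le> a" "a \<le> b" "b \<le> l" and pa: "phi a \<le> 2*pi* of_int k + pi/3"
  shows "phi b \<le> 2*pi* of_int k + 3 * W a b + 2*pi"
proof (rule ccontr)
  assume H: "\<not> ?thesis"
  define q where "q = \<lfloor>(phi b + pi/3)/(2*pi)\<rfloor>"
  have q1': "of_int q \<le> (phi b + pi/3)/(2*pi)" "(phi b + pi/3)/(2*pi) < of_int q + 1"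
    using floor_correct[of "(phi b + pi/3)/(2*pi)"] by (auto simp: q_def)
  have pp: "0 < 2*pi" by simp
  have q1: "2*pi* of_int q \<le> phi b + pi/3" using q1'(1) pos_le_divide_eq[OF pp] by (simp add: mult.commute)
  have q2: "phi b + pi/3 < 2*pi*(of_int q + 1)" using q1'(2) pos_divide_less_eq[OF pp] by (simp add: mult.commute)
  have Wn: "W a b \<ge> 0" using W_nonneg ab by auto
  have "2*pi*(of_int q + 1) = 2*pi* of_int q + 2*pi" by (simp add: algebra_simps)
  then have "2*pi* of_int k < 2*pi* of_int q" using q2 H Wn pi_gt_zero by linarith
  then have kq: "k < q" using pi_gt_zero by simp
  define j where "j = nat (q - k - 1)"
  have qj: "of_int q = of_int k + of_nat j + (1::real)" using kq by (simp add: j_def)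
  have "W a b \<ge> 2*pi/3 * (of_nat j + 1)"
    by (rule band_multi[OF ab pa]) (use q1 qj in \<open>simp add: algebra_simps\<close>)
  then have "2*pi*(of_int q - of_int k) \<le> 3 * W a b" using qj by (simp add: algebra_simps)
  then show False using q2 H pi_gt_zero by (simp add: algebra_simps)
qed


lemma neg_phase: "phase l (\<lambda>s. - g s) (\<lambda>s. - phi s)"
proof
  show "0 < l" by (rule l_pos)
  show "(\<lambda>s. - g s) absolutely_integrable_on {0..l}"
    using g_ai by (simp add: absolutely_integrable_on_def integrable_neg_iff)
  show "\<forall>s\<in>{0..l}. - phi s = - phi 0 + integral {0..s} (\<lambda>s. - g s)"
  proof
    fix s assume "s \<in> {0..l}"
    then have "phi s = phi 0 + integral {0..s} g" by (rule bspec[OF phi_eq])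
    then show "- phi s = - phi 0 + integral {0..s} (\<lambda>s. - g s)" unfolding integral_neg by linarith
  qed
qed

lemma W_neg: "phase.W (\<lambda>s. - g s) (\<lambda>s. - phi s) x y = W x y"
proof -
  interpret neg: phase l "\<lambda>s. - g s" "\<lambda>s. - phi s" by (rule neg_phase)
  have "neg.Wf = Wf" by (rule ext) (simp add: neg.Wf_def Wf_def)
  then show ?thesis by (simp add: neg.W_def W_def)
qed

lemma band_multi_rev:
  assumes "0 \<le> a" "a \<le> b" "b \<le> l" "phi b \<le> 2*pi* of_int p + pi/3"
    "phi a \<ge> 2*pi*(of_int p + of_nat j + 1) - pi/3"
  shows "W a b \<ge> 2*pi/3 * (of_nat j + 1)"
proof -
  interpret neg: phase l "\<lambda>s. - g s" "\<lambda>s. - phi s" by (rule neg_phase)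
  have "neg.W a b \<ge> 2*pi/3 * (of_nat j + 1)"
    by (rule neg.band_multi[of a b "- (p + int j + 1)"]) (use assms in \<open>auto simp: algebra_simps\<close>)
  then show ?thesis using W_neg by simp
qed

lemma up_bwd:
  assumes ab: "0 \<le> a" "a \<le> b" "b \<le> l" and pb: "phi b \<le> 2*pi* of_int k + pi/3"
  shows "phi a \<le> 2*pi* of_int k + 3 * W a b + 2*pi"
proof (rule ccontr)
  assume H: "\<not> ?thesis"
  define q where "q = \<lfloor>(phi a + pi/3)/(2*pi)\<rfloor>"
  have q1': "of_int q \<le> (phi a + pi/3)/(2*pi)" "(phi a + pi/3)/(2*pi) < of_int q + 1"
    using floor_correct[of "(phi a + pi/3)/(2*pi)"] by (auto simp: q_def)
  have pp: "0 < 2*pi" by simp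
  have q1: "2*pi* of_int q \<le> phi a + pi/3" using q1'(1) pos_le_divide_eq[OF pp] by (simp add: mult.commute)
  have q2: "phi a + pi/3 < 2*pi*(of_int q + 1)" using q1'(2) pos_divide_less_eq[OF pp] by (simp add: mult.commute)
  have Wn: "W a b \<ge> 0" using W_nonneg ab by auto
  have "2*pi*(of_int q + 1) = 2*pi* of_int q + 2*pi" by (simp add: algebra_simps)
  then have "2*pi* of_int k < 2*pi* of_int q" using q2 H Wn pi_gt_zero by linarith
  then have kq: "k < q" using pi_gt_zero by simp
  define j where "j = nat (q - k - 1)"
  have qj: "of_int q = of_int k + of_nat j + (1::real)" using kq by (simp add: j_def)
  have "W a b \<ge> 2*pi/3 * (of_nat j + 1)"
    by (rule band_multi_rev[OF ab pb]) (use q1 qj in \<open>simp add: algebra_simps\<close>)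
  then have "2*pi*(of_int q - of_int k) \<le> 3 * W a b" using qj by (simp add: algebra_simps)
  then show False using q2 H pi_gt_zero by (simp add: algebra_simps)
qed

lemma dist_fwd:
  assumes ab: "0 \<le> a" "a \<le> b" "b \<le> l" and pa: "\<bar>phi a - 2*pi* of_int k\<bar> \<le> pi/3"
  shows "\<bar>phi b - 2*pi* of_int k\<bar> \<le> 3 * W a b + 2*pi"
proof -
  interpret neg: phase l "\<lambda>s. - g s" "\<lambda>s. - phi s" by (rule neg_phase)
  have 1: "phi b \<le> 2*pi* of_int k + 3 * W a b + 2*pi" by (rule up_fwd[OF ab]) (use pa in linarith)
  have "- phi b \<le> 2*pi* of_int (-k) + 3 * neg.W a b + 2*pi" by (rule neg.up_fwd[OF ab]) (use pa in linarith)
  then have 2: "- phi b \<le> - 2*pi* of_int k + 3 * W a b + 2*pi" using W_neg by simp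
  show ?thesis using 1 2 by linarith
qed

lemma dist_bwd:
  assumes ab: "0 \<le> a" "a \<le> b" "b \<le> l" and pb: "\<bar>phi b - 2*pi* of_int k\<bar> \<le> pi/3"
  shows "\<bar>phi a - 2*pi* of_int k\<bar> \<le> 3 * W a b + 2*pi"
proof -
  interpret neg: phase l "\<lambda>s. - g s" "\<lambda>s. - phi s" by (rule neg_phase)
  have 1: "phi a \<le> 2*pi* of_int k + 3 * W a b + 2*pi" by (rule up_bwd[OF ab]) (use pb in linarith)
  have "- phi a \<le> 2*pi* of_int (-k) + 3 * neg.W a b + 2*pi" by (rule neg.up_bwd[OF ab]) (use pb in linarith)
  then have 2: "- phi a \<le> - 2*pi* of_int k + 3 * W a b + 2*pi" using W_neg by simp
  show ?thesis using 1 2 by linarith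
qed

lemma jump:
  assumes ab: "0 \<le> a" "a \<le> b" "b \<le> l" and pa: "\<bar>phi a - 2*pi* of_int k\<bar> \<le> pi/3"
    and pb: "\<bar>phi b - 2*pi* of_int k'\<bar> \<le> pi/3"
  shows "2*pi/3 * of_int \<bar>k' - k\<bar> \<le> W a b"
proof (cases "k = k'")
  case True then show ?thesis using W_nonneg ab by simp
next
  case False
  have pa1: "phi a \<le> 2*pi* of_int k + pi/3" "phi a \<ge> 2*pi* of_int k - pi/3" using pa unfolding abs_le_iff by linarith+
  have pb1: "phi b \<le> 2*pi* of_int k' + pi/3" "phi b \<ge> 2*pi* of_int k' - pi/3" using pb unfolding abs_le_iff by linarith+
  show ?thesis
  proof (cases "k < k'")
    case True
    define j where "j = nat (k' - k - 1)"
    have qj: "of_int k' = of_int k + of_nat j + (1::real)" using True by (simp add: j_def)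
    have "W a b \<ge> 2*pi/3 * (of_nat j + 1)"
      by (rule band_multi[OF ab, where p=k]) (use pa1 pb1 qj in \<open>auto simp: algebra_simps\<close>)
    moreover have "of_int \<bar>k' - k\<bar> = of_nat j + (1::real)" using qj True by simp
    ultimately show ?thesis by simp
  next
    case False
    then have kk: "k' < k" using \<open>k \<noteq> k'\<close> by simp
    define j where "j = nat (k - k' - 1)"
    have qj: "of_int k = of_int k' + of_nat j + (1::real)" using kk by (simp add: j_def)
    have "W a b \<ge> 2*pi/3 * (of_nat j + 1)"
      by (rule band_multi_rev[OF ab, where p=k']) (use pa1 pb1 qj in \<open>auto simp: algebra_simps\<close>)
    moreover have "of_int \<bar>k' - k\<bar> = of_nat j + (1::real)" using qj kk by simp
    ultimately show ?thesis by simp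
  qed
qed

end

lemma mono_chain:
  fixes t :: "nat \<Rightarrow> real"
  assumes "\<forall>i<K. t i \<le> t (Suc i)" "i \<le> j" "j \<le> K"
  shows "t i \<le> t j"
  using assms(2,3)
proof (induction j)
  case 0 then show ?case by simp
next
  case (Suc j)
  then show ?case
  proof (cases "i = Suc j")
    case False
    then have "t i \<le> t j" using Suc by auto
    then show ?thesis using assms(1) Suc(3) by (meson Suc_le_lessD order_trans)
  qed simp
qed

lemma grid_integral:
  fixes t :: "nat \<Rightarrow> real" and f :: "real \<Rightarrow> real"
  assumes mono: "\<forall>i<K. t i \<le> t (Suc i)" and int: "f integrable_on {t 0..t K}"
  shows "(\<Sum>i<K. integral {t i..t (Suc i)} f) = integral {t 0..t K} f"
  using mono int
proof (induction K)
  case 0 then show ?case by simp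
next
  case (Suc K)
  have m: "\<forall>i<K. t i \<le> t (Suc i)" using Suc(2) by auto
  have le1: "t 0 \<le> t K" using mono_chain[OF m, of 0 K] by simp
  have le2: "t K \<le> t (Suc K)" using Suc(2) by simp
  have iK: "f integrable_on {t 0..t K}" using Suc(3) by (rule integrable_subinterval_real) (use le2 in auto)
  have "(\<Sum>i<Suc K. integral {t i..t (Suc i)} f) = integral {t 0..t K} f + integral {t K..t (Suc K)} f"
    using Suc.IH[OF m iK] by simp
  also have "\<dots> = integral {t 0..t (Suc K)} f"
    by (rule Henstock_Kurzweil_Integration.integral_combine[OF le1 le2 Suc(3)])
  finally show ?case .
qed

lemma abel:
  fixes a u :: "nat \<Rightarrow> real"
  shows "(\<Sum>i<n. a i * (u (Suc i) - u i)) = a n * u n - a 0 * u 0 - (\<Sum>i<n. u (Suc i) * (a (Suc i) - a i))"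
  by (induction n) (simp_all add: algebra_simps)

lemma atoms:
  fixes d :: "nat \<Rightarrow> int" and x :: "nat \<Rightarrow> real"
  assumes sumQ: "(\<Sum>i<N. \<bar>d i\<bar>) \<le> int Q" and xA: "\<forall>i<N. x i \<in> A" and zA: "z \<in> A"
  shows "\<exists>pos wt. (\<forall>j<Q. pos j \<in> A \<and> \<bar>wt j\<bar> \<le> int Q) \<and>
     (\<forall>\<psi>::real\<Rightarrow>real. (\<Sum>i<N. of_int (d i) * \<psi> (x i)) = (\<Sum>j<Q. of_int (wt j) * \<psi> (pos j)))"
proof -
  define S where "S = {i\<in>{..<N}. d i \<noteq> 0}"
  have fS: "finite S" by (simp add: S_def)
  have "int (card S) = (\<Sum>i\<in>S. 1)" by simp
  also have "\<dots> \<le> (\<Sum>i\<in>S. \<bar>d i\<bar>)" by (rule sum_mono) (auto simp: S_def)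
  also have "\<dots> \<le> (\<Sum>i<N. \<bar>d i\<bar>)" by (rule sum_mono2) (auto simp: S_def)
  finally have cS: "card S \<le> Q" using sumQ by linarith
  obtain h where h: "bij_betw h {0..<card S} S" using ex_bij_betw_nat_finite[OF fS] by blast
  define pos where "pos j = (if j < card S then x (h j) else z)" for j
  define wt where "wt j = (if j < card S then d (h j) else 0)" for j
  have hS: "j < card S \<Longrightarrow> h j \<in> S" for j using h by (auto simp: bij_betw_def)
  have "\<forall>j<Q. pos j \<in> A \<and> \<bar>wt j\<bar> \<le> int Q"
  proof (intro allI impI conjI)
    fix j assume "j < Q"
    show "pos j \<in> A" using hS[of j] xA zA by (auto simp: pos_def S_def)
    show "\<bar>wt j\<bar> \<le> int Q"
    proof (cases "j < card S")
      case True
      then have hj: "h j \<in> {..<N}" using hS by (auto simp: S_def)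
      have "\<bar>d (h j)\<bar> \<le> (\<Sum>i<N. \<bar>d i\<bar>)" by (rule member_le_sum[OF hj]) auto
      then show ?thesis using True sumQ by (simp add: wt_def)
    qed (simp add: wt_def)
  qed
  moreover have "(\<Sum>i<N. of_int (d i) * \<psi> (x i)) = (\<Sum>j<Q. of_int (wt j) * \<psi> (pos j))" for \<psi> :: "real \<Rightarrow> real"
  proof -
    have "(\<Sum>i<N. of_int (d i) * \<psi> (x i)) = (\<Sum>i\<in>S. of_int (d i) * \<psi> (x i))"
      by (rule sum.mono_neutral_right) (auto simp: S_def)
    also have "\<dots> = (\<Sum>j\<in>{0..<card S}. of_int (d (h j)) * \<psi> (x (h j)))"
      by (rule sum.reindex_bij_betw[OF h, symmetric])
    also have "\<dots> = (\<Sum>j\<in>{0..<card S}. of_int (wt j) * \<psi> (pos j))"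
      by (rule sum.cong) (auto simp: wt_def pos_def)
    also have "\<dots> = (\<Sum>j<Q. of_int (wt j) * \<psi> (pos j))"
      by (rule sum.mono_neutral_left) (use cS in \<open>auto simp: wt_def\<close>)
    finally show ?thesis .
  qed
  ultimately show ?thesis by blast
qed

lemma adm_facts:
  assumes "flat_admissible l \<psi>" "0 \<le> l"
  shows "\<forall>s\<in>{0..l}. \<bar>\<psi> s\<bar> \<le> 1" "\<forall>x\<in>{0..l}. \<forall>y\<in>{0..l}. \<bar>\<psi> x - \<psi> y\<bar> \<le> \<bar>x - y\<bar>"
    "\<psi> 0 = \<psi> l" "continuous_on {0..l} \<psi>"
proof -
  obtain M L where HML: "\<forall>s\<in>{0..l}. \<bar>\<psi> s\<bar> \<le> M" "L-lipschitz_on {0..l} \<psi>" "M + L \<le> 1"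
    and e: "\<psi> 0 = \<psi> l" using assms(1) unfolding flat_admissible_def by blast
  have L0: "0 \<le> L" and Lp: "\<forall>x\<in>{0..l}. \<forall>y\<in>{0..l}. dist (\<psi> x) (\<psi> y) \<le> L * dist x y"
    using HML(2) unfolding lipschitz_on_def by auto
  have M0: "0 \<le> M" using HML(1) assms(2) by force
  show "\<forall>s\<in>{0..l}. \<bar>\<psi> s\<bar> \<le> 1" using HML L0 by force
  show "\<forall>x\<in>{0..l}. \<forall>y\<in>{0..l}. \<bar>\<psi> x - \<psi> y\<bar> \<le> \<bar>x - y\<bar>"
  proof (intro ballI)
    fix x y assume xy: "x \<in> {0..l}" "y \<in> {0..l}"
    have "\<bar>\<psi> x - \<psi> y\<bar> \<le> L * \<bar>x - y\<bar>" using Lp xy by (auto simp: dist_real_def)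
    also have "\<dots> \<le> 1 * \<bar>x - y\<bar>" using HML M0 by (intro mult_right_mono) auto
    finally show "\<bar>\<psi> x - \<psi> y\<bar> \<le> \<bar>x - y\<bar>" by simp
  qed
  show "\<psi> 0 = \<psi> l" by (rule e)
  show "continuous_on {0..l} \<psi>" using HML(2) by (rule lipschitz_on_continuous_on)
qed

context phase begin

lemma E1:
  fixes t :: "nat \<Rightarrow> real" and \<psi> :: "real \<Rightarrow> real"
  assumes mono: "\<forall>i<K. t i \<le> t (Suc i)" and t0: "t 0 = 0" and tK: "t K = l"
    and mesh: "\<forall>i<K. t (Suc i) - t i \<le> h"
    and lip: "\<forall>x\<in>{0..l}. \<forall>y\<in>{0..l}. \<bar>\<psi> x - \<psi> y\<bar> \<le> \<bar>x - y\<bar>"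
    and cont: "continuous_on {0..l} \<psi>"
  shows "\<bar>integral {0..l} (\<lambda>s. \<psi> s * g s) - (\<Sum>i<K. \<psi> (t i) * (phi (t (Suc i)) - phi (t i)))\<bar>
           \<le> h * integral {0..l} (\<lambda>s. \<bar>g s\<bar>)"
proof -
  have tin: "i \<le> K \<Longrightarrow> t i \<in> {0..l}" for i
    using mono_chain[OF mono, of 0 i] mono_chain[OF mono, of i K] t0 tK by auto
  have pg_ai: "(\<lambda>s. \<psi> s * g s) absolutely_integrable_on {0..l}" by (rule cont_times_absint[OF cont g_ai])
  have pg: "(\<lambda>s. \<psi> s * g s) integrable_on {0..l}" using pg_ai absolutely_integrable_on_def by blast
  have I1: "(\<Sum>i<K. integral {t i..t (Suc i)} (\<lambda>s. \<psi> s * g s)) = integral {0..l} (\<lambda>s. \<psi> s * g s)"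
    using grid_integral[OF mono, of "\<lambda>s. \<psi> s * g s"] pg t0 tK by simp
  have I2: "(\<Sum>i<K. integral {t i..t (Suc i)} (\<lambda>s. \<bar>g s\<bar>)) = integral {0..l} (\<lambda>s. \<bar>g s\<bar>)"
    using grid_integral[OF mono, of "\<lambda>s. \<bar>g s\<bar>"] absg_int t0 tK by simp
  have per: "\<bar>integral {t i..t (Suc i)} (\<lambda>s. \<psi> s * g s) - \<psi> (t i) * (phi (t (Suc i)) - phi (t i))\<bar>
      \<le> h * integral {t i..t (Suc i)} (\<lambda>s. \<bar>g s\<bar>)" if i: "i < K" for i
  proof -
    have ti: "t i \<in> {0..l}" "t (Suc i) \<in> {0..l}" "t i \<le> t (Suc i)" using tin[of i] tin[of "Suc i"] i mono by auto
    have gi: "g integrable_on {t i..t (Suc i)}" using ti by (intro g_int_sub) auto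
    have agi: "(\<lambda>s. \<bar>g s\<bar>) integrable_on {t i..t (Suc i)}" using ti by (intro absg_int_sub) auto
    have pgi: "(\<lambda>s. \<psi> s * g s) integrable_on {t i..t (Suc i)}"
      using pg by (rule integrable_subinterval_real) (use ti in auto)
    have "phi (t (Suc i)) - phi (t i) = integral {t i..t (Suc i)} g" using ti by (intro phi_diff) auto
    then have "integral {t i..t (Suc i)} (\<lambda>s. \<psi> s * g s) - \<psi> (t i) * (phi (t (Suc i)) - phi (t i))
        = integral {t i..t (Suc i)} (\<lambda>s. \<psi> s * g s - \<psi> (t i) * g s)"
      using gi pgi by (simp add: integral_diff integrable_on_mult_right)
    also have "\<bar>\<dots>\<bar> \<le> integral {t i..t (Suc i)} (\<lambda>s. h * \<bar>g s\<bar>)"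
    proof (rule integral_norm_bound_integral[where 'a=real, simplified real_norm_def])
      show "(\<lambda>s. \<psi> s * g s - \<psi> (t i) * g s) integrable_on {t i..t (Suc i)}"
        using gi pgi by (intro integrable_diff integrable_on_mult_right)
      show "(\<lambda>s. h * \<bar>g s\<bar>) integrable_on {t i..t (Suc i)}" using agi by (rule integrable_on_mult_right)
      fix s assume s: "s \<in> {t i..t (Suc i)}"
      have sl: "s \<in> {0..l}" using ti s by auto
      have "\<bar>\<psi> s - \<psi> (t i)\<bar> \<le> \<bar>s - t i\<bar>" using bspec[OF bspec[OF lip sl] ti(1)] .
      also have "\<dots> \<le> h" using s mesh i by auto
      finally have "\<bar>\<psi> s - \<psi> (t i)\<bar> * \<bar>g s\<bar> \<le> h * \<bar>g s\<bar>" by (intro mult_right_mono) auto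
      then show "\<bar>\<psi> s * g s - \<psi> (t i) * g s\<bar> \<le> h * \<bar>g s\<bar>"
        by (simp add: left_diff_distrib[symmetric] abs_mult)
    qed
    also have "\<dots> = h * integral {t i..t (Suc i)} (\<lambda>s. \<bar>g s\<bar>)" by simp
    finally show ?thesis .
  qed
  define D where "D i = integral {t i..t (Suc i)} (\<lambda>s. \<psi> s * g s) - \<psi> (t i) * (phi (t (Suc i)) - phi (t i))" for i
  have eq: "integral {0..l} (\<lambda>s. \<psi> s * g s) - (\<Sum>i<K. \<psi> (t i) * (phi (t (Suc i)) - phi (t i)))
      = (\<Sum>i<K. D i)"
    using I1 by (simp add: sum_subtractf D_def)
  have "\<bar>\<Sum>i<K. D i\<bar> \<le> (\<Sum>i<K. \<bar>D i\<bar>)" by (rule sum_abs)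
  moreover have "(\<Sum>i<K. \<bar>D i\<bar>) \<le> (\<Sum>i<K. h * integral {t i..t (Suc i)} (\<lambda>s. \<bar>g s\<bar>))"
    by (rule sum_mono) (use per in \<open>auto simp: D_def\<close>)
  moreover have "(\<Sum>i<K. h * integral {t i..t (Suc i)} (\<lambda>s. \<bar>g s\<bar>)) = h * integral {0..l} (\<lambda>s. \<bar>g s\<bar>)"
    using I2 by (simp add: sum_distrib_left[symmetric])
  ultimately show ?thesis unfolding eq by linarith
qed

end

context phase begin

lemma core:
  fixes N Q :: nat and \<delta> M G :: real and m :: int
  assumes N1: "1 \<le> N"
    and m: "phi l - phi 0 = 2*pi* of_int m"
    and WM: "W 0 l \<le> M"
    and G: "integral {0..l} (\<lambda>s. \<bar>g s\<bar>) \<le> G"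
    and \<delta>: "0 \<le> \<delta>" "\<delta> \<le> 1/8"
    and good: "\<forall>i<N. \<exists>s. real i * (l / real N) \<le> s \<and> s \<le> (real i + 1) * (l / real N) \<and> \<bar>sin (phi s / 2)\<bar> \<le> \<delta>"
    and Q: "M + 2 \<le> real Q"
  shows "\<exists>pos wt. (\<forall>j<Q. pos j \<in> {0..l} \<and> \<bar>wt j\<bar> \<le> int Q) \<and>
     (\<forall>\<psi>. flat_admissible l \<psi> \<longrightarrow>
        \<bar>integral {0..l} (\<lambda>s. \<psi> s * g s) - 2*pi*(\<Sum>j<Q. of_int (wt j) * \<psi> (pos j))\<bar>
          \<le> 2*(l/N)*G + 8*\<delta>*l + 2*(l/N)*(3*M+2*pi))"
proof -
  define w where "w = l / real N"
  have w0: "0 < w" using l_pos N1 by (simp add: w_def)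
  have Nw: "real N * w = l" using N1 by (simp add: w_def)
  have "\<forall>i. \<exists>s. i < N \<longrightarrow> real i * w \<le> s \<and> s \<le> (real i + 1) * w \<and> \<bar>sin (phi s / 2)\<bar> \<le> \<delta>"
    using good unfolding w_def by blast
  then obtain p where p: "\<And>i. i < N \<Longrightarrow> real i * w \<le> p i \<and> p i \<le> (real i + 1) * w \<and> \<bar>sin (phi (p i) / 2)\<bar> \<le> \<delta>"
    by metis
  define t where "t i = (if i = 0 then 0 else if i \<le> N then p (i - 1) else l)" for i
  have t0: "t 0 = 0" by (simp add: t_def)
  have tK: "t (Suc N) = l" by (simp add: t_def)
  have tgood: "(real i - 1) * w \<le> t i \<and> t i \<le> real i * w \<and> \<bar>sin (phi (t i) / 2)\<bar> \<le> \<delta>"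
    if "1 \<le> i" "i \<le> N" for i
  proof -
    have "i - 1 < N" using that by simp
    moreover have "real (i - 1) = real i - 1" using that by simp
    ultimately show ?thesis using p[of "i - 1"] that by (simp add: t_def)
  qed
  have mono: "\<forall>i<Suc N. t i \<le> t (Suc i)"
  proof (intro allI impI)
    fix i assume i: "i < Suc N"
    show "t i \<le> t (Suc i)"
    proof (cases "i = 0")
      case True
      then show ?thesis using tgood[of 1] N1 w0 by (simp add: t0)
    next
      case False
      show ?thesis
      proof (cases "i = N")
        case True
        then show ?thesis using tgood[of N] N1 Nw tK by simp
      next
        case False
        then have "1 \<le> i" "Suc i \<le> N" using \<open>i \<noteq> 0\<close> i by auto
        then show ?thesis using tgood[of i] tgood[of "Suc i"] by simp
      qed
    qed
  qed
  have mesh: "\<forall>i<Suc N. t (Suc i) - t i \<le> 2*w"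
  proof (intro allI impI)
    fix i assume i: "i < Suc N"
    show "t (Suc i) - t i \<le> 2*w"
    proof (cases "i = 0")
      case True
      then show ?thesis using tgood[of 1] N1 w0 by (simp add: t0)
    next
      case False
      show ?thesis
      proof (cases "i = N")
        case True
        have e: "(real N - 1) * w = real N * w - w" by (simp add: algebra_simps)
        have tN: "(real N - 1) * w \<le> t N" using tgood[of N] N1 by simp
        show ?thesis unfolding True tK using e tN Nw w0 by linarith
      next
        case False
        then have "1 \<le> i" "Suc i \<le> N" using \<open>i \<noteq> 0\<close> i by auto
        moreover have "real (Suc i) * w - (real i - 1) * w = 2 * w" by (simp add: algebra_simps)
        ultimately show ?thesis using tgood[of i] tgood[of "Suc i"] by simp
      qed
    qed
  qed
  have tin: "i \<le> Suc N \<Longrightarrow> t i \<in> {0..l}" for i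
    using mono_chain[OF mono, of 0 i] mono_chain[OF mono, of i "Suc N"] t0 tK by auto
  define nn where "nn i = (if i = 0 then round (phi (t N) / (2*pi)) - m else round (phi (t i) / (2*pi)))" for i
  have ndist: "\<bar>phi (t i) - 2*pi* of_int (nn i)\<bar> \<le> 8*\<delta>" if "1 \<le> i" "i \<le> N" for i
    using sin_small_dist[of "phi (t i)" \<delta>] tgood[OF that] that by (simp add: nn_def)
  have ndist3: "\<bar>phi (t i) - 2*pi* of_int (nn i)\<bar> \<le> pi/3" if "1 \<le> i" "i \<le> N" for i
    using ndist[OF that] \<delta> pi_gt3 by linarith
  define d where "d i = nn (Suc i) - nn i" for i
  define WW where "WW i = W (t i) (t (Suc i))" for i
  have WWsum: "(\<Sum>i<Suc N. WW i) = W 0 l"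
    using grid_integral[OF mono, of Wf] Wf_int_sub[of 0 l] t0 tK by (simp add: WW_def W_def)
  have WWnn: "WW i \<ge> 0" if "i < Suc N" for i
    using tin[of i] tin[of "Suc i"] that unfolding WW_def by (intro W_nonneg) auto
  have M0: "0 \<le> M" using WM W_nonneg[of 0 l] by auto
  have dN: "\<bar>phi l - 2*pi* of_int (nn N)\<bar> \<le> 3 * WW N + 2*pi"
    using dist_fwd[of "t N" l "nn N"] tin[of N] ndist3[of N] N1 tK by (auto simp: WW_def)
  have d1: "\<bar>phi 0 - 2*pi* of_int (nn 1)\<bar> \<le> 3 * WW 0 + 2*pi"
    using dist_bwd[of 0 "t 1" "nn 1"] tin[of 1] ndist3[of 1] N1 t0 by (auto simp: WW_def)
  have "2*pi* of_int (d 0) = (2*pi* of_int (nn 1) - phi 0) + (phi l - 2*pi* of_int (nn N))"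
    using m N1 by (simp add: d_def nn_def algebra_simps)
  then have dd0: "2*pi* of_int \<bar>d 0\<bar> \<le> 3 * WW 0 + 3 * WW N + 4*pi"
    using dN d1 by (simp add: abs_le_iff) linarith
  have ddi: "2*pi* of_int \<bar>d i\<bar> \<le> 3 * WW i" if "1 \<le> i" "i < N" for i
  proof -
    have "2*pi/3 * of_int \<bar>nn (Suc i) - nn i\<bar> \<le> W (t i) (t (Suc i))"
      by (rule jump) (use tin[of i] tin[of "Suc i"] mono that ndist3[of i] ndist3[of "Suc i"] in auto)
    then show ?thesis by (simp add: d_def WW_def)
  qed
  have "2*pi* (\<Sum>i<N. of_int \<bar>d i\<bar>) \<le> 3 * W 0 l + 4*pi"
  proof -
    have s1: "(\<Sum>i<N. of_int \<bar>d i\<bar> :: real) = of_int \<bar>d 0\<bar> + (\<Sum>i\<in>{1..<N}. of_int \<bar>d i\<bar>)"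
      using N1 by (simp add: lessThan_atLeast0 sum.atLeast_Suc_lessThan)
    have s2: "(\<Sum>i<Suc N. WW i) = WW 0 + (\<Sum>i\<in>{1..<N}. WW i) + WW N"
      using N1 by (simp add: lessThan_atLeast0 sum.atLeast_Suc_lessThan)
    have s3: "(\<Sum>i\<in>{1..<N}. 2*pi* of_int \<bar>d i\<bar>) \<le> (\<Sum>i\<in>{1..<N}. 3 * WW i)"
      by (rule sum_mono) (use ddi in auto)
    have "2*pi* (\<Sum>i<N. of_int \<bar>d i\<bar>) = 2*pi* of_int \<bar>d 0\<bar> + (\<Sum>i\<in>{1..<N}. 2*pi* of_int \<bar>d i\<bar>)"
      unfolding s1 by (simp add: sum_distrib_left algebra_simps)
    also have "\<dots> \<le> 3 * WW 0 + 3 * WW N + 4*pi + (\<Sum>i\<in>{1..<N}. 3 * WW i)" using dd0 s3 by linarith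
    also have "\<dots> = 3 * (\<Sum>i<Suc N. WW i) + 4*pi" unfolding s2 by (simp add: sum_distrib_left algebra_simps)
    finally show ?thesis using WWsum by simp
  qed
  then have "(\<Sum>i<N. of_int \<bar>d i\<bar>) \<le> 3 * M / (2*pi) + 2"
    using WM pi_gt_zero by (simp add: field_simps)
  also have "3 * M / (2*pi) \<le> M" using M0 pi_gt3 by (simp add: field_simps) (intro mult_left_mono, auto)
  finally have "real_of_int (\<Sum>i<N. \<bar>d i\<bar>) \<le> real Q" using Q by simp
  then have sumQ: "(\<Sum>i<N. \<bar>d i\<bar>) \<le> int Q" by linarith
  obtain pos wt where pw: "\<forall>j<Q. pos j \<in> {0..l} \<and> \<bar>wt j\<bar> \<le> int Q"
    and pweq: "\<And>\<psi>::real\<Rightarrow>real. (\<Sum>i<N. of_int (d i) * \<psi> (t i)) = (\<Sum>j<Q. of_int (wt j) * \<psi> (pos j))"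
    using atoms[OF sumQ, of t "{0..l}" 0] tin l_pos by auto
  have "\<bar>integral {0..l} (\<lambda>s. \<psi> s * g s) - 2*pi*(\<Sum>j<Q. of_int (wt j) * \<psi> (pos j))\<bar>
          \<le> 2*(l/N)*G + 8*\<delta>*l + 2*(l/N)*(3*M+2*pi)" if adm: "flat_admissible l \<psi>" for \<psi>
  proof -
    note af = adm_facts[OF adm less_imp_le[OF l_pos]]
    define a where "a i = \<psi> (t i)" for i
    define u where "u i = phi (t i)" for i
    define v where "v i = 2*pi* of_int (nn i)" for i
    define S1 where "S1 = (\<Sum>i<Suc N. a i * (u (Suc i) - u i))"
    define S2 where "S2 = (\<Sum>i<N. a i * (v (Suc i) - v i))"
    have e1: "\<bar>integral {0..l} (\<lambda>s. \<psi> s * g s) - S1\<bar> \<le> 2*w * integral {0..l} (\<lambda>s. \<bar>g s\<bar>)"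
      unfolding S1_def a_def u_def by (rule E1[OF mono t0 tK mesh af(2) af(4)])
    have e1': "2*w * integral {0..l} (\<lambda>s. \<bar>g s\<bar>) \<le> 2*w*G" using G w0 by simp
    have S2eq: "S2 = 2*pi*(\<Sum>j<Q. of_int (wt j) * \<psi> (pos j))"
      unfolding pweq[symmetric] S2_def by (simp add: sum_distrib_left d_def a_def v_def algebra_simps)
    have aN1: "a (Suc N) = a 0" using af(3) by (simp add: a_def t0 tK)
    have v0: "v 0 = v N - u (Suc N) + u 0" using m N1 by (simp add: v_def u_def nn_def t0 tK algebra_simps)
    have ab1: "S1 = a (Suc N) * u (Suc N) - a 0 * u 0 - (\<Sum>i<Suc N. u (Suc i) * (a (Suc i) - a i))"
      unfolding S1_def by (rule abel)
    have ab2: "S2 = a N * v N - a 0 * v 0 - (\<Sum>i<N. v (Suc i) * (a (Suc i) - a i))"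
      unfolding S2_def by (rule abel)
    have id: "S1 - S2 = (a 0 - a N) * (v N - u (Suc N)) - (\<Sum>i<N. (u (Suc i) - v (Suc i)) * (a (Suc i) - a i))"
      unfolding ab1 ab2 v0 by (simp add: algebra_simps sum_subtractf sum.distrib aN1)
    have b1: "\<bar>a 0 - a N\<bar> \<le> 2*w"
    proof -
      have "\<bar>a 0 - a N\<bar> = \<bar>\<psi> l - \<psi> (t N)\<bar>" using af(3) by (simp add: a_def t0)
      also have "\<dots> \<le> \<bar>l - t N\<bar>"
      proof -
        have lN: "l \<in> {0..l}" using l_pos by auto
        have tNin: "t N \<in> {0..l}" using tin[of N] by simp
        show ?thesis using bspec[OF bspec[OF af(2) lN] tNin] .
      qed
      also have "\<dots> \<le> 2*w" using mesh tin[of N] tK by auto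
      finally show ?thesis .
    qed
    have b2: "\<bar>v N - u (Suc N)\<bar> \<le> 3*M + 2*pi"
    proof -
      have "WW N \<le> W 0 l" unfolding WW_def using tin[of N] tK by (intro W_mono) auto
      then show ?thesis using dN WM by (simp add: v_def u_def tK abs_minus_commute)
    qed
    have b12: "\<bar>(a 0 - a N) * (v N - u (Suc N))\<bar> \<le> 2*w * (3*M + 2*pi)"
      unfolding abs_mult by (rule mult_mono[OF b1 b2]) (use w0 in auto)
    have b3: "\<bar>\<Sum>i<N. (u (Suc i) - v (Suc i)) * (a (Suc i) - a i)\<bar> \<le> 8*\<delta>*l"
    proof -
      have "\<bar>\<Sum>i<N. (u (Suc i) - v (Suc i)) * (a (Suc i) - a i)\<bar> \<le> (\<Sum>i<N. \<bar>(u (Suc i) - v (Suc i)) * (a (Suc i) - a i)\<bar>)"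
        by (rule sum_abs)
      also have "\<dots> \<le> (\<Sum>i<N. 8*\<delta> * (t (Suc i) - t i))"
      proof (rule sum_mono)
        fix i assume "i \<in> {..<N}"
        then have i: "i < N" by simp
        have x1: "\<bar>u (Suc i) - v (Suc i)\<bar> \<le> 8*\<delta>" using ndist[of "Suc i"] i by (simp add: u_def v_def)
        have tii: "t i \<in> {0..l}" "t (Suc i) \<in> {0..l}" using tin[of i] tin[of "Suc i"] i by auto
        have x2: "\<bar>a (Suc i) - a i\<bar> \<le> t (Suc i) - t i"
          using bspec[OF bspec[OF af(2) tii(2)] tii(1)] i mono by (auto simp: a_def)
        show "\<bar>(u (Suc i) - v (Suc i)) * (a (Suc i) - a i)\<bar> \<le> 8*\<delta> * (t (Suc i) - t i)"
          unfolding abs_mult by (rule mult_mono[OF x1 x2]) (use \<delta> in auto)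
      qed
      also have "\<dots> = 8*\<delta> * (t N - t 0)" by (simp add: sum_distrib_left[symmetric] sum_lessThan_telescope)
      also have "\<dots> \<le> 8*\<delta>*l" using tin[of N] t0 \<delta> by (simp add: mult_left_mono)
      finally show ?thesis .
    qed
    have "\<bar>S1 - S2\<bar> \<le> 2*w * (3*M + 2*pi) + 8*\<delta>*l" unfolding id using b12 b3 by linarith
    then have "\<bar>integral {0..l} (\<lambda>s. \<psi> s * g s) - S2\<bar> \<le> 2*w*G + 8*\<delta>*l + 2*w*(3*M+2*pi)"
      using e1 e1' by linarith
    then show ?thesis unfolding S2eq w_def .
  qed
  then show ?thesis using pw by blast
qed

end

lemma norm_vec2_sq: "(norm (x :: real^2))^2 = (x$1)^2 + (x$2)^2"
  unfolding power2_norm_eq_inner by (simp add: inner_vec_def sum_2 power2_eq_square)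

lemma unit_diff:
  "(norm (vector [cos a, sin a] - vector [cos b, sin b] :: real^2))^2 = 4 * (sin ((a - b)/2))^2"
proof -
  have "(norm (vector [cos a, sin a] - vector [cos b, sin b] :: real^2))^2 = (cos a - cos b)^2 + (sin a - sin b)^2"
    by (simp add: norm_vec2_sq)
  also have "\<dots> = 2 - 2 * (cos a * cos b + sin a * sin b)"
    using sin_cos_squared_add[of a] sin_cos_squared_add[of b] by (simp add: power2_eq_square algebra_simps)
  also have "\<dots> = 2 - 2 * cos (a - b)" by (simp add: cos_diff)
  also have "cos (a - b) = 1 - 2 * (sin ((a - b)/2))^2"
  proof -
    have e: "2 * ((a - b)/2) = a - b" by simp
    show ?thesis using cos_double_sin[of "(a-b)/2"] unfolding e .
  qed
  finally show ?thesis by simp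
qed

lemma angle_closed:
  assumes "vector [cos a, sin a] = (vector [cos b, sin b] :: real^2)"
  shows "\<exists>m::int. a = b + 2*pi* of_int m"
proof -
  have "cos a = cos b" "sin a = sin b"
    using arg_cong[OF assms, of "\<lambda>v. v$1"] arg_cong[OF assms, of "\<lambda>v. v$2"] by auto
  then show ?thesis using sin_cos_eq_iff by blast
qed

lemma per_e:
  fixes l C :: real and dg de :: "real \<Rightarrow> real^2" and k ke :: "real \<Rightarrow> real" and n :: nat
  assumes l_pos: "0 < l" and C_pos: "0 < C" and n1: "1 \<le> n" and large: "16 * C < l * real n"
    and cg: "curvature_of l dg k" and ce: "curvature_of l de ke"
    and clg: "dg 0 = dg l" and cle: "de 0 = de l"
    and H2: "(\<lambda>s. (ke s)^2) integrable_on {0..l}"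
    and b1: "integral {0..l} (\<lambda>s. (ke s)^2) \<le> C * real n ^ 12"
    and b2: "integral {0..l} (\<lambda>s. (norm (de s - dg s))^2) \<le> C / real n ^ 12"
  defines "K1 \<equiv> integral {0..l} (\<lambda>s. \<bar>k s\<bar>)"
  shows "\<exists>pos wt. (\<forall>j<nat \<lceil>C + K1\<rceil> + 2. pos j \<in> {0..l} \<and> \<bar>wt j\<bar> \<le> int (nat \<lceil>C + K1\<rceil> + 2)) \<and>
     (\<forall>\<psi>. flat_admissible l \<psi> \<longrightarrow>
        \<bar>integral {0..l} (\<lambda>s. \<psi> s * (ke s - k s)) - 2*pi*(\<Sum>j<nat \<lceil>C + K1\<rceil> + 2. of_int (wt j) * \<psi> (pos j))\<bar>
          \<le> (l*(C+l) + 2*l*K1 + l + 2*l*(3*(C+K1) + 2*pi)) / real n)"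
proof -
  obtain th where th: "\<forall>s\<in>{0..l}. dg s = vector [cos (th s), sin (th s)] \<and> th s = th 0 + integral {0..s} k"
    and k_ai: "k absolutely_integrable_on {0..l}"
    using cg unfolding curvature_of_def by blast
  obtain te where te: "\<forall>s\<in>{0..l}. de s = vector [cos (te s), sin (te s)] \<and> te s = te 0 + integral {0..s} ke"
    and ke_ai: "ke absolutely_integrable_on {0..l}"
    using ce unfolding curvature_of_def by blast
  have l0: "0 \<in> {0..l}" "l \<in> {0..l}" using l_pos by auto
  define g where "g s = ke s - k s" for s
  define phi where "phi s = te s - th s" for s
  have k_int: "k integrable_on {0..l}" by (rule set_lebesgue_integral_eq_integral(1)[OF k_ai])
  have ke_int: "ke integrable_on {0..l}" by (rule set_lebesgue_integral_eq_integral(1)[OF ke_ai])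
  have ak_int: "(\<lambda>s. \<bar>k s\<bar>) integrable_on {0..l}" using k_ai by (simp add: absolutely_integrable_on_def)
  have ake_int: "(\<lambda>s. \<bar>ke s\<bar>) integrable_on {0..l}" using ke_ai by (simp add: absolutely_integrable_on_def)
  have g_ai: "g absolutely_integrable_on {0..l}" unfolding g_def using ke_ai k_ai by (rule set_integral_diff(1))
  interpret P: phase l g phi
  proof
    show "0 < l" by (rule l_pos)
    show "g absolutely_integrable_on {0..l}" by (rule g_ai)
    show "\<forall>s\<in>{0..l}. phi s = phi 0 + integral {0..s} g"
    proof
      fix s assume s: "s \<in> {0..l}"
      have "integral {0..s} g = integral {0..s} ke - integral {0..s} k" unfolding g_def
        by (rule integral_diff) (use s ke_int k_int in \<open>auto intro: integrable_subinterval_real\<close>)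
      moreover have "te s = te 0 + integral {0..s} ke" by (rule conjunct2[OF bspec[OF te s]])
      moreover have "th s = th 0 + integral {0..s} k" by (rule conjunct2[OF bspec[OF th s]])
      ultimately show "phi s = phi 0 + integral {0..s} g" by (simp add: phi_def)
    qed
  qed
  obtain m1 :: int where m1: "th l = th 0 + 2*pi* of_int m1"
    using angle_closed[of "th l" "th 0"] conjunct1[OF bspec[OF th l0(1)]] conjunct1[OF bspec[OF th l0(2)]] clg by metis
  obtain m2 :: int where m2: "te l = te 0 + 2*pi* of_int m2"
    using angle_closed[of "te l" "te 0"] conjunct1[OF bspec[OF te l0(1)]] conjunct1[OF bspec[OF te l0(2)]] cle by metis
  have mm: "phi l - phi 0 = 2*pi* of_int (m2 - m1)" using m1 m2 by (simp add: phi_def algebra_simps)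
  define S where "S s = sin (phi s / 2)" for s
  have S_cont: "continuous_on {0..l} S" unfolding S_def by (intro continuous_intros P.phi_cont) auto
  have S2_int: "(\<lambda>s. (S s)^2) integrable_on {0..l}" by (intro integrable_continuous_real continuous_intros S_cont)
  have npos: "0 < real n" using n1 by simp
  have intS2: "integral {0..l} (\<lambda>s. (S s)^2) \<le> C / (4 * real n ^ 12)"
  proof -
    have "integral {0..l} (\<lambda>s. (norm (de s - dg s))^2) = integral {0..l} (\<lambda>s. 4 * (S s)^2)"
    proof (rule integral_cong)
      fix s assume "s \<in> {0..l}"
      then have "de s = vector [cos (te s), sin (te s)]" "dg s = vector [cos (th s), sin (th s)]"
        using conjunct1[OF bspec[OF te]] conjunct1[OF bspec[OF th]] by auto
      then show "(norm (de s - dg s))^2 = 4 * (S s)^2" using unit_diff[of "te s" "th s"]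
        by (simp add: S_def phi_def)
    qed
    then have "4 * integral {0..l} (\<lambda>s. (S s)^2) \<le> C / real n ^ 12" using b2 by simp
    then show ?thesis by (simp add: field_simps)
  qed
  have S2_nn: "\<And>s. 0 \<le> (S s)^2" by simp
  define M where "M = C + K1"
  have amgm: "\<bar>x\<bar> * \<bar>y\<bar> \<le> (x^2 / t + t * y^2) / 2" if "0 < t" for x y t :: real
  proof -
    have "0 \<le> (\<bar>x\<bar> - t * \<bar>y\<bar>)^2" by simp
    then have "2 * t * (\<bar>x\<bar> * \<bar>y\<bar>) \<le> x^2 + t^2 * y^2" by (simp add: power2_eq_square algebra_simps)
    then show ?thesis using that by (simp add: field_simps power2_eq_square)
  qed
  define T where "T = real n ^ 12"
  have T0: "0 < T" using npos by (simp add: T_def)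
  have ke2: "integral {0..l} (\<lambda>s. (ke s)^2) \<le> C * T" using b1 by (simp add: T_def)
  have WM: "P.W 0 l \<le> M"
  proof -
    have "P.W 0 l \<le> integral {0..l} (\<lambda>s. ((ke s)^2 / T + T * (S s)^2) / 2 + \<bar>k s\<bar>)"
      unfolding P.W_def
    proof (rule integral_le)
      show "P.Wf integrable_on {0..l}" using P.Wf_int_sub[of 0 l] by simp
      show "(\<lambda>s. ((ke s)^2 / T + T * (S s)^2) / 2 + \<bar>k s\<bar>) integrable_on {0..l}"
        by (intro integrable_add integrable_on_divide integrable_on_mult_right H2 S2_int ak_int)
    next
      fix s assume "s \<in> {0..l}"
      have "\<bar>g s\<bar> * \<bar>S s\<bar> \<le> (\<bar>ke s\<bar> + \<bar>k s\<bar>) * \<bar>S s\<bar>" unfolding g_def by (intro mult_right_mono) auto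
      also have "\<dots> = \<bar>ke s\<bar> * \<bar>S s\<bar> + \<bar>k s\<bar> * \<bar>S s\<bar>" by (simp add: algebra_simps)
      also have "\<bar>k s\<bar> * \<bar>S s\<bar> \<le> \<bar>k s\<bar> * 1" unfolding S_def by (intro mult_left_mono) auto
      also have "\<bar>ke s\<bar> * \<bar>S s\<bar> \<le> ((ke s)^2 / T + T * (S s)^2) / 2" by (rule amgm[OF T0])
      finally show "P.Wf s \<le> ((ke s)^2 / T + T * (S s)^2) / 2 + \<bar>k s\<bar>" by (simp add: P.Wf_def S_def)
    qed
    also have "\<dots> = (integral {0..l} (\<lambda>s. (ke s)^2) / T + T * integral {0..l} (\<lambda>s. (S s)^2)) / 2 + K1"
    proof -
      have i1: "(\<lambda>s. (ke s)^2 / T) integrable_on {0..l}" using H2 by (rule integrable_on_divide)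
      have i2: "(\<lambda>s. T * (S s)^2) integrable_on {0..l}" using S2_int by (rule integrable_on_mult_right)
      have "integral {0..l} (\<lambda>s. ((ke s)^2 / T + T * (S s)^2) / 2 + \<bar>k s\<bar>)
          = integral {0..l} (\<lambda>s. ((ke s)^2 / T + T * (S s)^2) / 2) + K1"
        unfolding K1_def by (rule integral_add) (use i1 i2 ak_int in \<open>auto intro!: integrable_add integrable_on_divide\<close>)
      also have "integral {0..l} (\<lambda>s. ((ke s)^2 / T + T * (S s)^2) / 2)
          = (integral {0..l} (\<lambda>s. (ke s)^2 / T) + integral {0..l} (\<lambda>s. T * (S s)^2)) / 2"
      proof -
        have i12: "(\<lambda>s. (ke s)^2 / T + T * (S s)^2) integrable_on {0..l}" using i1 i2 by (rule integrable_add)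
        have "integral {0..l} (\<lambda>s. ((ke s)^2 / T + T * (S s)^2) / 2) = integral {0..l} (\<lambda>s. (ke s)^2 / T + T * (S s)^2) / 2"
          by (rule integral_unique[OF has_integral_divide[OF integrable_integral[OF i12]]])
        then show ?thesis using integral_add[OF i1 i2] by simp
      qed
      also have "integral {0..l} (\<lambda>s. (ke s)^2 / T) = integral {0..l} (\<lambda>s. (ke s)^2) / T"
        by (rule integral_unique[OF has_integral_divide[OF integrable_integral[OF H2]]])
      also have "integral {0..l} (\<lambda>s. T * (S s)^2) = T * integral {0..l} (\<lambda>s. (S s)^2)"
        by simp
      finally show ?thesis .
    qed
    also have "\<dots> \<le> (C + T * (C / (4 * T))) / 2 + K1"
    proof -
      have "integral {0..l} (\<lambda>s. (ke s)^2) / T \<le> C" using ke2 T0 by (simp add: field_simps)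
      moreover have "T * integral {0..l} (\<lambda>s. (S s)^2) \<le> T * (C / (4 * T))"
        using intS2 T0 by (intro mult_left_mono) (auto simp: T_def)
      ultimately show ?thesis by (intro add_right_mono divide_right_mono add_mono) auto
    qed
    also have "\<dots> = 5 * C / 8 + K1" using T0 by (simp add: field_simps)
    also have "\<dots> \<le> M" using C_pos by (simp add: M_def)
    finally show ?thesis .
  qed
  have K1nn: "0 \<le> K1" unfolding K1_def by (rule integral_nonneg[OF ak_int]) auto
  define T6 where "T6 = real n ^ 6"
  have T60: "0 < T6" using npos by (simp add: T6_def)
  have TT: "T = T6 * T6" by (simp add: T_def T6_def power_add[symmetric])
  define G where "G = (C + l) * T6 / 2 + K1"
  have Gb: "integral {0..l} (\<lambda>s. \<bar>g s\<bar>) \<le> G"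
  proof -
    have i1: "(\<lambda>s. (ke s)^2 / T6) integrable_on {0..l}" using H2 by (rule integrable_on_divide)
    have "integral {0..l} (\<lambda>s. \<bar>g s\<bar>) \<le> integral {0..l} (\<lambda>s. ((ke s)^2 / T6 + T6) / 2 + \<bar>k s\<bar>)"
    proof (rule integral_le)
      show "(\<lambda>s. \<bar>g s\<bar>) integrable_on {0..l}" by (rule P.absg_int)
      show "(\<lambda>s. ((ke s)^2 / T6 + T6) / 2 + \<bar>k s\<bar>) integrable_on {0..l}"
        by (intro integrable_add integrable_on_divide i1 ak_int integrable_const_ivl)
    next
      fix s assume "s \<in> {0..l}"
      have "\<bar>ke s\<bar> * \<bar>1\<bar> \<le> ((ke s)^2 / T6 + T6 * 1^2) / 2" by (rule amgm[OF T60])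
      then have "\<bar>ke s\<bar> \<le> ((ke s)^2 / T6 + T6) / 2" by simp
      moreover have "\<bar>ke s - k s\<bar> \<le> \<bar>ke s\<bar> + \<bar>k s\<bar>" by (rule abs_triangle_ineq4)
      ultimately show "\<bar>g s\<bar> \<le> ((ke s)^2 / T6 + T6) / 2 + \<bar>k s\<bar>" unfolding g_def by linarith
    qed
    also have "\<dots> = (integral {0..l} (\<lambda>s. (ke s)^2) / T6 + T6 * l) / 2 + K1"
    proof -
      have i12: "(\<lambda>s. (ke s)^2 / T6 + T6) integrable_on {0..l}" by (intro integrable_add i1 integrable_const_ivl)
      have "integral {0..l} (\<lambda>s. ((ke s)^2 / T6 + T6) / 2 + \<bar>k s\<bar>)
          = integral {0..l} (\<lambda>s. ((ke s)^2 / T6 + T6) / 2) + K1"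
        unfolding K1_def by (rule integral_add) (use i12 ak_int in \<open>auto intro!: integrable_on_divide\<close>)
      also have "integral {0..l} (\<lambda>s. ((ke s)^2 / T6 + T6) / 2) = integral {0..l} (\<lambda>s. (ke s)^2 / T6 + T6) / 2"
        by (rule integral_unique[OF has_integral_divide[OF integrable_integral[OF i12]]])
      also have "integral {0..l} (\<lambda>s. (ke s)^2 / T6 + T6) = integral {0..l} (\<lambda>s. (ke s)^2 / T6) + T6 * l"
        using integral_add[OF i1 integrable_const_ivl[of T6 0 l]] l_pos by simp
      also have "integral {0..l} (\<lambda>s. (ke s)^2 / T6) = integral {0..l} (\<lambda>s. (ke s)^2) / T6"
        by (rule integral_unique[OF has_integral_divide[OF integrable_integral[OF H2]]])
      finally show ?thesis .
    qed
    also have "\<dots> \<le> G"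
    proof -
      have "integral {0..l} (\<lambda>s. (ke s)^2) / T6 \<le> C * T / T6" using ke2 T60 by (intro divide_right_mono) auto
      also have "C * T / T6 = C * T6" using T60 by (simp add: TT)
      finally have "integral {0..l} (\<lambda>s. (ke s)^2) / T6 \<le> C * T6" .
      then show ?thesis unfolding G_def by (simp add: algebra_simps)
    qed
    finally show ?thesis .
  qed
  define N where "N = n ^ 9"
  define \<delta> where "\<delta> = 1 / (8 * real n)"
  have N1: "1 \<le> N" using n1 by (simp add: N_def)
  have \<delta>b: "0 \<le> \<delta>" "\<delta> \<le> 1/8" using n1 by (auto simp: \<delta>_def field_simps)
  have good: "\<forall>i<N. \<exists>s. real i * (l / real N) \<le> s \<and> s \<le> (real i + 1) * (l / real N) \<and> \<bar>sin (phi s / 2)\<bar> \<le> \<delta>"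
  proof (intro allI impI, rule ccontr)
    fix i assume i: "i < N" and H: "\<not> (\<exists>s. real i * (l / real N) \<le> s \<and> s \<le> (real i + 1) * (l / real N) \<and> \<bar>sin (phi s / 2)\<bar> \<le> \<delta>)"
    define w where "w = l / real N"
    have w0: "0 < w" using l_pos N1 by (simp add: w_def)
    have sub: "{real i * w..(real i + 1) * w} \<subseteq> {0..l}"
    proof -
      have "(real i + 1) * w \<le> real N * w" using i w0 by (intro mult_right_mono) auto
      also have "real N * w = l" using N1 by (simp add: w_def)
      finally show ?thesis using w0 by auto
    qed
    have bad: "\<delta>^2 \<le> (S s)^2" if "s \<in> {real i * w..(real i + 1) * w}" for s
    proof -
      have "\<delta> < \<bar>S s\<bar>" using H that by (auto simp: S_def w_def)
      then show ?thesis using \<delta>b by (metis abs_of_nonneg less_imp_le power2_abs power_mono)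
    qed
    have "w * \<delta>^2 = integral {real i * w..(real i + 1) * w} (\<lambda>s. \<delta>^2)"
      using w0 by (simp add: algebra_simps)
    also have "\<dots> \<le> integral {real i * w..(real i + 1) * w} (\<lambda>s. (S s)^2)"
      by (rule integral_le) (use bad S2_int sub in \<open>auto intro: integrable_on_subinterval\<close>)
    also have "\<dots> \<le> integral {0..l} (\<lambda>s. (S s)^2)"
      by (rule integral_subset_le[OF sub _ S2_int]) (use S2_int sub in \<open>auto intro: integrable_on_subinterval\<close>)
    also have "\<dots> \<le> C / (4 * T)" using intS2 by (simp add: T_def)
    finally have le: "w * \<delta>^2 \<le> C / (4 * T)" .
    have e1: "w * \<delta>^2 = (l * real n) / (64 * T)"
      by (simp add: w_def \<delta>_def N_def T_def field_simps power2_eq_square eval_nat_numeral)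
    have e2: "C / (4 * T) = (16 * C) / (64 * T)" by simp
    have "(16 * C) / (64 * T) < (l * real n) / (64 * T)" using large T0 by (intro divide_strict_right_mono) auto
    then show False using le e1 e2 by linarith
  qed
  define Q where "Q = nat \<lceil>C + K1\<rceil> + 2"
  have Qb: "M + 2 \<le> real Q" unfolding Q_def M_def by linarith
  obtain pos wt where pw: "\<forall>j<Q. pos j \<in> {0..l} \<and> \<bar>wt j\<bar> \<le> int Q"
    and est: "\<And>\<psi>. flat_admissible l \<psi> \<Longrightarrow>
        \<bar>integral {0..l} (\<lambda>s. \<psi> s * g s) - 2*pi*(\<Sum>j<Q. of_int (wt j) * \<psi> (pos j))\<bar>
          \<le> 2*(l/N)*G + 8*\<delta>*l + 2*(l/N)*(3*M+2*pi)"
    using P.core[OF N1 mm WM Gb \<delta>b good Qb] by blast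
  have errb: "2*(l/N)*G + 8*\<delta>*l + 2*(l/N)*(3*M+2*pi) \<le> (l*(C+l) + 2*l*K1 + l + 2*l*(3*(C+K1) + 2*pi)) / real n"
  proof -
    have pd: "A / real n ^ k \<le> A / real n" if "0 \<le> A" "1 \<le> k" for A k
    proof -
      have "real n ^ 1 \<le> real n ^ k" using n1 that by (intro power_increasing) auto
      then show ?thesis using that npos by (intro divide_left_mono) auto
    qed
    have a1: "2*(l/N)*G = l*(C+l) / real n ^ 3 + 2*l*K1 / real n ^ 9"
      using npos by (simp add: N_def G_def T6_def field_simps eval_nat_numeral)
    have a2: "8*\<delta>*l = l / real n" using npos by (simp add: \<delta>_def)
    have a3: "2*(l/N)*(3*M+2*pi) = 2*l*(3*(C+K1) + 2*pi) / real n ^ 9" by (simp add: N_def M_def)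
    have "l*(C+l) / real n ^ 3 \<le> l*(C+l) / real n" using l_pos C_pos by (intro pd) auto
    moreover have "2*l*K1 / real n ^ 9 \<le> 2*l*K1 / real n" using l_pos K1nn by (intro pd) auto
    moreover have "2*l*(3*(C+K1) + 2*pi) / real n ^ 9 \<le> 2*l*(3*(C+K1) + 2*pi) / real n"
      using l_pos C_pos K1nn pi_gt_zero by (intro pd) auto
    ultimately show ?thesis unfolding a1 a2 a3 by (simp add: add_divide_distrib)
  qed
  show ?thesis
    using pw est errb unfolding Q_def[symmetric] g_def by (meson order_trans)
qed

lemma bounded_subseq:
  fixes x :: "nat \<Rightarrow> nat \<Rightarrow> real"
  assumes B: "\<And>k j. \<bar>x k j\<bar> \<le> B"
  shows "\<exists>r y. strict_mono r \<and> (\<forall>j<D. (\<lambda>k. x (r k) j) \<longlonglongrightarrow> y j)"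
proof (induction D)
  case 0
  show ?case by (rule exI[of _ id]) (auto simp: strict_mono_def)
next
  case (Suc D)
  then obtain r y where r: "strict_mono r" and y: "\<forall>j<D. (\<lambda>k. x (r k) j) \<longlonglongrightarrow> y j" by blast
  have "bounded (range (\<lambda>k. x (r k) D))"
    unfolding bounded_iff using B by (auto simp: real_norm_def)
  then obtain lD r2 where r2: "strict_mono r2" and lim: "((\<lambda>k. x (r k) D) \<circ> r2) \<longlonglongrightarrow> lD"
    using bounded_imp_convergent_subsequence by blast
  show ?case
  proof (intro exI conjI allI impI)
    show "strict_mono (r \<circ> r2)" using r r2 by (rule strict_mono_o)
    fix j assume j: "j < Suc D"
    show "(\<lambda>k. x ((r \<circ> r2) k) j) \<longlonglongrightarrow> (y(D := lD)) j"
    proof (cases "j = D")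
      case True
      then show ?thesis using lim by (simp add: o_def)
    next
      case False
      then have "j < D" using j by simp
      then have "((\<lambda>k. x (r k) j) \<circ> r2) \<longlonglongrightarrow> y j" using y r2 by (intro LIMSEQ_subseq_LIMSEQ) auto
      then show ?thesis using False by (simp add: o_def)
    qed
  qed
qed

lemma int_conv:
  fixes f :: "nat \<Rightarrow> int"
  assumes "(\<lambda>k. real_of_int (f k)) \<longlonglongrightarrow> y"
  shows "\<exists>z. eventually (\<lambda>k. f k = z) sequentially"
proof -
  have "eventually (\<lambda>k. dist (real_of_int (f k)) y < 1/2) sequentially"
    using assms by (rule tendstoD) simp
  then obtain K where K: "\<And>k. k \<ge> K \<Longrightarrow> \<bar>real_of_int (f k) - y\<bar> < 1/2"
    by (auto simp: eventually_sequentially dist_real_def)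
  have "f k = f K" if "k \<ge> K" for k
  proof -
    have "\<bar>real_of_int (f k) - real_of_int (f K)\<bar> < 1" using K[OF that] K[of K] by linarith
    then have "\<bar>f k - f K\<bar> < 1" by linarith
    then show ?thesis by linarith
  qed
  then show ?thesis unfolding eventually_sequentially by blast
qed

lemma regroup:
  fixes Q :: nat and z :: "nat \<Rightarrow> int" and y :: "nat \<Rightarrow> real" and \<psi> :: "real \<Rightarrow> real"
  defines "c \<equiv> (\<lambda>x. \<Sum>j\<in>{j. j < Q \<and> y j = x}. z j)"
  shows "(\<Sum>x\<in>{x. c x \<noteq> 0}. of_int (c x) * \<psi> x) = (\<Sum>j<Q. of_int (z j) * \<psi> (y j))"
proof -
  have sub: "{x. c x \<noteq> 0} \<subseteq> y ` {..<Q}"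
  proof
    fix x assume "x \<in> {x. c x \<noteq> 0}"
    then have cx: "c x \<noteq> 0" by simp
    show "x \<in> y ` {..<Q}"
    proof (rule ccontr)
      assume "x \<notin> y ` {..<Q}"
      then have "{j. j < Q \<and> y j = x} = {}" by auto
      then have "c x = 0" unfolding c_def by (simp only: sum.empty)
      then show False using cx by simp
    qed
  qed
  have "(\<Sum>j<Q. of_int (z j) * \<psi> (y j)) = (\<Sum>x\<in>y ` {..<Q}. \<Sum>j\<in>{j. j \<in> {..<Q} \<and> y j = x}. of_int (z j) * \<psi> (y j))"
    by (rule sum.image_gen) simp
  also have "\<dots> = (\<Sum>x\<in>y ` {..<Q}. of_int (c x) * \<psi> x)"
  proof (rule sum.cong[OF refl])
    fix x assume "x \<in> y ` {..<Q}"
    have "(\<Sum>j\<in>{j. j \<in> {..<Q} \<and> y j = x}. of_int (z j) * \<psi> (y j)) = (\<Sum>j\<in>{j. j < Q \<and> y j = x}. of_int (z j) * \<psi> x)"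
      by (rule sum.cong) auto
    also have "\<dots> = of_int (c x) * \<psi> x" by (simp add: c_def sum_distrib_right)
    finally show "(\<Sum>j\<in>{j. j \<in> {..<Q} \<and> y j = x}. of_int (z j) * \<psi> (y j)) = of_int (c x) * \<psi> x" .
  qed
  also have "\<dots> = (\<Sum>x\<in>{x. c x \<noteq> 0}. of_int (c x) * \<psi> x)"
    by (rule sum.mono_neutral_right) (use sub in auto)
  finally show ?thesis by simp
qed

lemma adm_zero: "flat_admissible l (\<lambda>_. 0)"
  unfolding flat_admissible_def lipschitz_on_def by (rule conjI, rule exI[of _ 0], rule exI[of _ 0]) auto

lemma pairing_zero: "pairing l f c (\<lambda>_. 0) = 0"
  by (simp add: pairing_def)

lemma flat_norm_bound:
  assumes "\<And>\<psi>. flat_admissible l \<psi> \<Longrightarrow> pairing l f c \<psi> \<le> \<beta>"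
  shows "0 \<le> flat_norm l f c" "flat_norm l f c \<le> \<beta>"
proof -
  have bdd: "bdd_above ((\<lambda>\<psi>. pairing l f c \<psi>) ` {\<psi>. flat_admissible l \<psi>})"
    using assms by (auto intro!: bdd_aboveI)
  have "pairing l f c (\<lambda>_. 0) \<le> flat_norm l f c"
    unfolding flat_norm_def by (rule cSUP_upper[OF _ bdd]) (simp add: adm_zero)
  then show "0 \<le> flat_norm l f c" by (simp add: pairing_zero)
  show "flat_norm l f c \<le> \<beta>"
    unfolding flat_norm_def by (rule cSUP_least) (use adm_zero assms in auto)
qed

theorem proposition6p3:
  fixes l C :: real
    and gamma dgamma ddgamma :: "real \<Rightarrow> real^2" and kappa :: "real \<Rightarrow> real"
    and gammae dgammae :: "real \<Rightarrow> real \<Rightarrow> real^2" and kappae :: "real \<Rightarrow> real \<Rightarrow> real"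
  assumes l_pos: "l > 0"
    and gamma_d1: "\<forall>s\<in>{0..l}. (gamma has_vector_derivative dgamma s) (at s within {0..l})"
    and gamma_d2: "\<forall>s\<in>{0..l}. (dgamma has_vector_derivative ddgamma s) (at s within {0..l})"
    and gamma_C2: "continuous_on {0..l} ddgamma"
    and gamma_unit: "\<forall>s\<in>{0..l}. norm (dgamma s) = 1"
    and gamma_closed: "gamma 0 = gamma l" "dgamma 0 = dgamma l" "ddgamma 0 = ddgamma l"
    and gamma_curv: "curvature_of l dgamma kappa"
    and ge_d1: "\<forall>e\<in>{0<..1}. \<forall>s\<in>{0..l}.
                  (gammae e has_vector_derivative dgammae e s) (at s within {0..l})"
    and ge_closed: "\<forall>e\<in>{0<..1}. gammae e 0 = gammae e l \<and> dgammae e 0 = dgammae e l"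
    and ge_curv: "\<forall>e\<in>{0<..1}. curvature_of l (dgammae e) (kappae e)"
    and ge_H2: "\<forall>e\<in>{0<..1}. (\<lambda>s. (kappae e s)^2) integrable_on {0..l}"
    and C_pos: "C > 0"
    and bound1: "\<forall>e\<in>{0<..1}. sqrt e * integral {0..l} (\<lambda>s. (kappae e s)^2) \<le> C"
    and bound2: "\<forall>e\<in>{0<..1}.
                   integral {0..l} (\<lambda>s. (norm (dgammae e s - dgamma s))^2) \<le> C * sqrt e"
  shows "\<exists>eps :: nat \<Rightarrow> real. \<exists>c \<in> Mfin_Z l.
           (\<forall>k. eps k \<in> {0<..1}) \<and> eps \<longlonglongrightarrow> 0 \<and>
           (\<lambda>k. flat_norm l (\<lambda>s. kappae (eps k) s - kappa s) (\<lambda>x. - c x)) \<longlonglongrightarrow> 0"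
proof -
  define K1 where "K1 = integral {0..l} (\<lambda>s. \<bar>kappa s\<bar>)"
  define Q where "Q = nat \<lceil>C + K1\<rceil> + 2"
  define Err where "Err = l*(C+l) + 2*l*K1 + l + 2*l*(3*(C+K1) + 2*pi)"
  define n0 where "n0 = nat \<lceil>16*C/l\<rceil> + 1"
  define ee where "ee n = 1 / real n ^ 24" for n :: nat
  have n01: "1 \<le> n0" by (simp add: n0_def)
  have large: "16*C < l * real n" if "n0 \<le> n" for n
  proof -
    have "16*C/l < real n0" unfolding n0_def by linarith
    also have "\<dots> \<le> real n" using that by simp
    finally show ?thesis using l_pos by (simp add: field_simps)
  qed
  have ee_in: "ee n \<in> {0<..1}" if "1 \<le> n" for n
    using that by (simp add: ee_def)
  have sq: "sqrt (ee n) = 1 / real n ^ 12" if "1 \<le> n" for n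
  proof -
    have "ee n = (1 / real n ^ 12)^2" by (simp add: ee_def power_mult_distrib[symmetric] power_mult[symmetric] power_divide)
    then show ?thesis by simp
  qed
  define Prop where "Prop n pw \<longleftrightarrow> (\<forall>j<Q. fst pw j \<in> {0..l} \<and> \<bar>snd pw j\<bar> \<le> int Q) \<and>
     (\<forall>\<psi>. flat_admissible l \<psi> \<longrightarrow>
        \<bar>integral {0..l} (\<lambda>s. \<psi> s * (kappae (ee n) s - kappa s)) - 2*pi*(\<Sum>j<Q. of_int (snd pw j) * \<psi> (fst pw j))\<bar>
          \<le> Err / real n)" for n :: nat and pw :: "(nat \<Rightarrow> real) \<times> (nat \<Rightarrow> int)"
  have per: "\<exists>pw. Prop n pw" if n: "n0 \<le> n" for n
  proof -
    have n1: "1 \<le> n" using n n01 by simp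
    have e: "ee n \<in> {0<..1}" by (rule ee_in[OF n1])
    have npos: "0 < real n ^ 12" using n1 by simp
    have b1: "integral {0..l} (\<lambda>s. (kappae (ee n) s)^2) \<le> C * real n ^ 12"
    proof -
      have "1 / real n ^ 12 * integral {0..l} (\<lambda>s. (kappae (ee n) s)^2) \<le> C"
        using bspec[OF bound1 e] unfolding sq[OF n1] .
      then show ?thesis using npos by (simp add: field_simps)
    qed
    have b2: "integral {0..l} (\<lambda>s. (norm (dgammae (ee n) s - dgamma s))^2) \<le> C / real n ^ 12"
      using bspec[OF bound2 e] unfolding sq[OF n1] by simp
    obtain pos wt where "(\<forall>j<nat \<lceil>C + K1\<rceil> + 2. pos j \<in> {0..l} \<and> \<bar>wt j\<bar> \<le> int (nat \<lceil>C + K1\<rceil> + 2)) \<and>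
     (\<forall>\<psi>. flat_admissible l \<psi> \<longrightarrow>
        \<bar>integral {0..l} (\<lambda>s. \<psi> s * (kappae (ee n) s - kappa s)) - 2*pi*(\<Sum>j<nat \<lceil>C + K1\<rceil> + 2. of_int (wt j) * \<psi> (pos j))\<bar>
          \<le> (l*(C+l) + 2*l*K1 + l + 2*l*(3*(C+K1) + 2*pi)) / real n)"
      using per_e[OF l_pos C_pos n1 large[OF n] gamma_curv bspec[OF ge_curv e] gamma_closed(2)
          conjunct2[OF bspec[OF ge_closed e]] bspec[OF ge_H2 e] b1 b2] unfolding K1_def by blast
    then show ?thesis unfolding Prop_def Q_def[symmetric] Err_def[symmetric] by (intro exI[of _ "(pos, wt)"]) simp
  qed
  have "\<forall>n. \<exists>pw. n0 \<le> n \<longrightarrow> Prop n pw" using per by blast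
  then have "\<exists>PW. \<forall>n. n0 \<le> n \<longrightarrow> Prop n (PW n)" by (rule choice)
  then obtain PW where PWp: "\<forall>n. n0 \<le> n \<longrightarrow> Prop n (PW n)" by (elim exE)
  have PW: "Prop n (PW n)" if "n0 \<le> n" for n using PWp that by blast
  define POS where "POS k = fst (PW (k + n0))" for k
  define WT where "WT k = snd (PW (k + n0))" for k
  have POSin: "\<And>k j. j < Q \<Longrightarrow> POS k j \<in> {0..l}" using PW unfolding POS_def Prop_def by simp
  have WTb: "\<And>k j. j < Q \<Longrightarrow> \<bar>WT k j\<bar> \<le> int Q" using PW unfolding WT_def Prop_def by simp
  have est: "
        \<bar>integral {0..l} (\<lambda>s. \<psi> s * (kappae (ee (k + n0)) s - kappa s)) - 2*pi*(\<Sum>j<Q. of_int (WT k j) * \<psi> (POS k j))\<bar>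
          \<le> Err / real (k + n0)" if "flat_admissible l \<psi>" for k \<psi>
  proof -
    have "Prop (k + n0) (PW (k + n0))" by (rule PW) simp
    then show ?thesis using that unfolding Prop_def POS_def WT_def by blast
  qed
  define x where "x k j = (if j < Q then POS k j else if j < 2*Q then real_of_int (WT k (j - Q)) else 0)" for k j
  have xb: "\<bar>x k j\<bar> \<le> l + real Q" for k j
  proof -
    have "\<bar>POS k j\<bar> \<le> l" if "j < Q" using POSin[OF that] by auto
    moreover have "\<bar>real_of_int (WT k (j - Q))\<bar> \<le> real Q" if "\<not> j < Q" "j < 2*Q"
      using WTb[of "j - Q" k] that by linarith
    ultimately show ?thesis unfolding x_def using l_pos by auto
  qed
  have "\<exists>r y. strict_mono r \<and> (\<forall>j<2*Q. (\<lambda>k. x (r k) j) \<longlonglongrightarrow> y j)"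
    by (rule bounded_subseq[of x "l + real Q"]) (rule xb)
  then obtain r y where r: "strict_mono r" and ry: "\<forall>j<2*Q. (\<lambda>k. x (r k) j) \<longlonglongrightarrow> y j"
    by blast
  have limPOS: "(\<lambda>k. POS (r k) j) \<longlonglongrightarrow> y j" if "j < Q" for j
  proof -
    have "(\<lambda>k. x (r k) j) \<longlonglongrightarrow> y j" using ry that by simp
    moreover have "(\<lambda>k. x (r k) j) = (\<lambda>k. POS (r k) j)" using that by (simp add: x_def)
    ultimately show ?thesis by simp
  qed
  have limWT: "(\<lambda>k. real_of_int (WT (r k) j)) \<longlonglongrightarrow> y (Q + j)" if "j < Q" for j
  proof -
    have "(\<lambda>k. x (r k) (Q + j)) \<longlonglongrightarrow> y (Q + j)" using ry that by simp
    moreover have "(\<lambda>k. x (r k) (Q + j)) = (\<lambda>k. real_of_int (WT (r k) j))" using that by (simp add: x_def)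
    ultimately show ?thesis by simp
  qed
  have "\<forall>j. \<exists>zj. j < Q \<longrightarrow> eventually (\<lambda>k. WT (r k) j = zj) sequentially"
    using int_conv[OF limWT] by blast
  then obtain z where z: "\<And>j. j < Q \<Longrightarrow> eventually (\<lambda>k. WT (r k) j = z j) sequentially" by metis
  have evz: "eventually (\<lambda>k. \<forall>j\<in>{..<Q}. WT (r k) j = z j) sequentially"
    by (rule eventually_ball_finite) (use z in auto)
  have yin: "y j \<in> {0..l}" if "j < Q" for j
  proof -
    have "0 \<le> y j" by (rule LIMSEQ_le_const[OF limPOS[OF that]]) (use POSin that in auto)
    moreover have "y j \<le> l" by (rule LIMSEQ_le_const2[OF limPOS[OF that]]) (use POSin that in auto)
    ultimately show ?thesis by simp
  qed
  define c where "c = (\<lambda>x. \<Sum>j\<in>{j. j < Q \<and> y j = x}. z j)"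
  define eps where "eps k = ee (r k + n0)" for k
  have csub: "{x. c x \<noteq> 0} \<subseteq> y ` {..<Q}"
  proof
    fix x assume "x \<in> {x. c x \<noteq> 0}"
    then have cx: "c x \<noteq> 0" by simp
    show "x \<in> y ` {..<Q}"
    proof (rule ccontr)
      assume "x \<notin> y ` {..<Q}"
      then have "{j. j < Q \<and> y j = x} = {}" by auto
      then have "c x = 0" unfolding c_def by (simp only: sum.empty)
      then show False using cx by simp
    qed
  qed
  have cM: "c \<in> Mfin_Z l"
    unfolding Mfin_Z_def using csub yin by (auto intro: finite_subset)
  have rk: "k \<le> r k" for k using r by (rule seq_suble)
  have inv0: "(\<lambda>k. 1 / real (r k + n0)) \<longlonglongrightarrow> 0"
  proof (rule tendsto_sandwich[of "\<lambda>_. 0" _ _ "\<lambda>k. inverse (real (Suc k))"])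
    show "eventually (\<lambda>k. 0 \<le> 1 / real (r k + n0)) sequentially" by simp
    show "eventually (\<lambda>k. 1 / real (r k + n0) \<le> inverse (real (Suc k))) sequentially"
    proof (rule always_eventually, rule allI)
      fix k
      have "real (Suc k) \<le> real (r k + n0)" using rk[of k] n01 by simp
      then show "1 / real (r k + n0) \<le> inverse (real (Suc k))"
        by (simp add: inverse_eq_divide frac_le)
    qed
  qed (use LIMSEQ_inverse_real_of_nat in auto)
  have eps_in: "eps k \<in> {0<..1}" for k unfolding eps_def by (rule ee_in) (use n01 in simp)
  have eps0: "eps \<longlonglongrightarrow> 0"
  proof (rule tendsto_sandwich[of "\<lambda>_. 0" _ _ "\<lambda>k. 1 / real (r k + n0)"])
    show "eventually (\<lambda>k. 0 \<le> eps k) sequentially" using eps_in by (simp add: less_imp_le)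
    show "eventually (\<lambda>k. eps k \<le> 1 / real (r k + n0)) sequentially"
    proof (rule always_eventually, rule allI)
      fix k
      have n1: "1 \<le> real (r k + n0)" using n01 by simp
      have "real (r k + n0) ^ 1 \<le> real (r k + n0) ^ 24" using n1 by (intro power_increasing) auto
      then show "eps k \<le> 1 / real (r k + n0)" using n1 unfolding eps_def ee_def by (intro divide_left_mono) auto
    qed
  qed (use inv0 in auto)
  define \<beta> where "\<beta> k = Err / real (r k + n0) + 2*pi*(\<Sum>j<Q. \<bar>real_of_int (z j)\<bar> * \<bar>POS (r k) j - y j\<bar>)" for k
  have \<beta>0: "\<beta> \<longlonglongrightarrow> 0"
  proof -
    have a: "(\<lambda>k. Err / real (r k + n0)) \<longlonglongrightarrow> 0"
      using tendsto_mult_right_zero[OF inv0, of Err] by simp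
    have "(\<lambda>k. \<Sum>j<Q. \<bar>real_of_int (z j)\<bar> * \<bar>POS (r k) j - y j\<bar>) \<longlonglongrightarrow> 0"
    proof (rule tendsto_null_sum)
      fix j assume "j \<in> {..<Q}"
      then have "(\<lambda>k. POS (r k) j - y j) \<longlonglongrightarrow> 0" using limPOS by (intro LIM_zero) auto
      then have "(\<lambda>k. \<bar>POS (r k) j - y j\<bar>) \<longlonglongrightarrow> 0" by (rule tendsto_rabs_zero)
      then show "(\<lambda>k. \<bar>real_of_int (z j)\<bar> * \<bar>POS (r k) j - y j\<bar>) \<longlonglongrightarrow> 0" by (rule tendsto_mult_right_zero)
    qed
    then have b: "(\<lambda>k. 2*pi*(\<Sum>j<Q. \<bar>real_of_int (z j)\<bar> * \<bar>POS (r k) j - y j\<bar>)) \<longlonglongrightarrow> 0"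
      by (rule tendsto_mult_right_zero)
    show ?thesis unfolding \<beta>_def using tendsto_add_zero[OF a b] by simp
  qed
  have bound: "0 \<le> flat_norm l (\<lambda>s. kappae (eps k) s - kappa s) (\<lambda>x. - c x) \<and>
               flat_norm l (\<lambda>s. kappae (eps k) s - kappa s) (\<lambda>x. - c x) \<le> \<beta> k"
    if wz: "\<forall>j\<in>{..<Q}. WT (r k) j = z j" for k
  proof -
    have "pairing l (\<lambda>s. kappae (eps k) s - kappa s) (\<lambda>x. - c x) \<psi> \<le> \<beta> k" if adm: "flat_admissible l \<psi>" for \<psi>
    proof -
      note af = adm_facts[OF adm less_imp_le[OF l_pos]]
      define I where "I = integral {0..l} (\<lambda>s. \<psi> s * (kappae (eps k) s - kappa s))"
      have s1: "(\<Sum>x\<in>{x. - c x \<noteq> 0}. of_int (- c x) * \<psi> x) = - (\<Sum>j<Q. of_int (z j) * \<psi> (y j))"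
      proof -
        have "(\<Sum>x\<in>{x. - c x \<noteq> 0}. of_int (- c x) * \<psi> x) = - (\<Sum>x\<in>{x. c x \<noteq> 0}. of_int (c x) * \<psi> x)"
          by (simp add: sum_negf)
        also have "(\<Sum>x\<in>{x. c x \<noteq> 0}. of_int (c x) * \<psi> x) = (\<Sum>j<Q. of_int (z j) * \<psi> (y j))"
          unfolding c_def by (rule regroup)
        finally show ?thesis .
      qed
      have p: "pairing l (\<lambda>s. kappae (eps k) s - kappa s) (\<lambda>x. - c x) \<psi> = I - 2*pi*(\<Sum>j<Q. of_int (z j) * \<psi> (y j))"
        unfolding pairing_def I_def s1 by simp
      have e1: "\<bar>I - 2*pi*(\<Sum>j<Q. of_int (z j) * \<psi> (POS (r k) j))\<bar> \<le> Err / real (r k + n0)"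
      proof -
        have "(\<Sum>j<Q. of_int (WT (r k) j) * \<psi> (POS (r k) j)) = (\<Sum>j<Q. of_int (z j) * \<psi> (POS (r k) j))"
          using wz by simp
        then show ?thesis using est[OF adm, of "r k"] unfolding I_def eps_def by simp
      qed
      have e2: "\<bar>(\<Sum>j<Q. of_int (z j) * \<psi> (POS (r k) j)) - (\<Sum>j<Q. of_int (z j) * \<psi> (y j))\<bar>
                \<le> (\<Sum>j<Q. \<bar>real_of_int (z j)\<bar> * \<bar>POS (r k) j - y j\<bar>)"
      proof -
        have "\<bar>(\<Sum>j<Q. of_int (z j) * \<psi> (POS (r k) j)) - (\<Sum>j<Q. of_int (z j) * \<psi> (y j))\<bar>
            = \<bar>\<Sum>j<Q. of_int (z j) * (\<psi> (POS (r k) j) - \<psi> (y j))\<bar>"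
          by (simp add: sum_subtractf algebra_simps)
        also have "\<dots> \<le> (\<Sum>j<Q. \<bar>of_int (z j) * (\<psi> (POS (r k) j) - \<psi> (y j))\<bar>)" by (rule sum_abs)
        also have "\<dots> \<le> (\<Sum>j<Q. \<bar>real_of_int (z j)\<bar> * \<bar>POS (r k) j - y j\<bar>)"
        proof (rule sum_mono)
          fix j assume "j \<in> {..<Q}"
          then have j: "j < Q" by simp
          have "\<bar>\<psi> (POS (r k) j) - \<psi> (y j)\<bar> \<le> \<bar>POS (r k) j - y j\<bar>"
            using bspec[OF bspec[OF af(2) POSin[OF j]] yin[OF j]] .
          then show "\<bar>of_int (z j) * (\<psi> (POS (r k) j) - \<psi> (y j))\<bar> \<le> \<bar>real_of_int (z j)\<bar> * \<bar>POS (r k) j - y j\<bar>"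
            unfolding abs_mult by (intro mult_left_mono) auto
        qed
        finally show ?thesis .
      qed
      have "I - 2*pi*(\<Sum>j<Q. of_int (z j) * \<psi> (y j)) =
            (I - 2*pi*(\<Sum>j<Q. of_int (z j) * \<psi> (POS (r k) j))) +
            2*pi*((\<Sum>j<Q. of_int (z j) * \<psi> (POS (r k) j)) - (\<Sum>j<Q. of_int (z j) * \<psi> (y j)))"
        by (simp add: algebra_simps)
      also have "\<dots> \<le> Err / real (r k + n0) + 2*pi*(\<Sum>j<Q. \<bar>real_of_int (z j)\<bar> * \<bar>POS (r k) j - y j\<bar>)"
      proof -
        have "2*pi*((\<Sum>j<Q. of_int (z j) * \<psi> (POS (r k) j)) - (\<Sum>j<Q. of_int (z j) * \<psi> (y j)))
            \<le> 2*pi*(\<Sum>j<Q. \<bar>real_of_int (z j)\<bar> * \<bar>POS (r k) j - y j\<bar>)"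
          using e2 pi_gt_zero by (intro mult_left_mono) auto
        then show ?thesis using e1 by linarith
      qed
      finally show ?thesis unfolding p \<beta>_def .
    qed
    then show ?thesis using flat_norm_bound by blast
  qed
  have fn0: "(\<lambda>k. flat_norm l (\<lambda>s. kappae (eps k) s - kappa s) (\<lambda>x. - c x)) \<longlonglongrightarrow> 0"
  proof (rule tendsto_sandwich[of "\<lambda>_. 0" _ _ \<beta>])
    show "eventually (\<lambda>k. 0 \<le> flat_norm l (\<lambda>s. kappae (eps k) s - kappa s) (\<lambda>x. - c x)) sequentially"
      using evz by eventually_elim (use bound in blast)
    show "eventually (\<lambda>k. flat_norm l (\<lambda>s. kappae (eps k) s - kappa s) (\<lambda>x. - c x) \<le> \<beta> k) sequentially"
      using evz by eventually_elim (use bound in blast)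
  qed (auto intro: \<beta>0)
  show ?thesis
    by (intro exI[of _ eps] bexI[OF _ cM] conjI allI eps_in eps0 fn0)
qed

end
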